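(* Let $w$ be a Coxeter element of the irreducible euclidean Coxeter group $W$ of type $\widetilde A_n$. Then there is a chamber $\sigma$ of the Coxeter complex of $W$ which produces $w$ as one of its bigon Coxeter elements.
   Context: $W=\mathrm{Cox}(\widetilde A_n)$ is generated by the reflections of a euclidean space in the facets of a euclidean simplex, acting properly and cocompactly; chambers (images of the simplex) form the Coxeter complex and the reflections in the facets of any chamber are canonically identified with the vertices of the diagram $\Gamma$, which for $n\ge2$ is a cycle on $n+1$ vertices. The Coxeter element produced by a chamber and an acyclic orientation of $\Gamma$ is the product of the reflections in its facets in any order where $s$ precedes $t$ whenever there is an edge $s\to t$. For $n\ge2$, a $(p,q)$-bigon Coxeter element produced by a chamber is one produced by an acyclic orientation with a unique source and a unique sink, $p$ consecutive edges oriented clockwise and $q$ consecutive edges oriented counterclockwise, with $p\ge q\ge1$ and $p+q=n+1$; bigon Coxeter elements are the $(p,q)$-bigon Coxeter elements for such $p,q$. For $n=1$, a Coxeter element (product of the two facet reflections of a chamber in either order) is regarded as a $(1,1)$-bigon Coxeter element. *)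

theory Defs
  imports "HOL-Analysis.Analysis"
begin

text \<open>Standard model of the euclidean Coxeter group of type affine A_n, with n + 1 = CARD('n):
  the euclidean space is V = {x in R^(n+1). sum of coordinates = 0}; the reflecting
  hyperplanes are H(i,j,k) = {x in V. x_i - x_j = k} (i ~= j, k integer).
  Maps are extended to all of R^(n+1) by the same formula (they fix the diagonal direction),
  so equality of maps on R^(n+1) is equality on V.\<close>

definition ambient :: "(real^'n::finite) set" where
  "ambient = {x. (\<Sum>i\<in>UNIV. x$i) = 0}"

definition hyp :: "'n::finite \<Rightarrow> 'n \<Rightarrow> int \<Rightarrow> (real^'n) set" where
  "hyp i j k = {x \<in> ambient. x$i - x$j = of_int k}"

definition is_wall :: "(real^'n::finite) set \<Rightarrow> bool" where
  "is_wall H \<longleftrightarrow> (\<exists>i j k. i \<noteq> j \<and> H = hyp i j k)"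

definition refl :: "'n::finite \<Rightarrow> 'n \<Rightarrow> int \<Rightarrow> real^'n \<Rightarrow> real^'n" where
  "refl i j k x = x - (x$i - x$j - of_int k) *\<^sub>R (axis i 1 - axis j 1)"

definition chamber :: "(real^'n::finite) set \<Rightarrow> bool" where
  "chamber C \<longleftrightarrow> C \<in> components (ambient - \<Union>{H. is_wall H})"

definition facet_wall :: "(real^'n::finite) set \<Rightarrow> (real^'n) set \<Rightarrow> bool" where
  "facet_wall C H \<longleftrightarrow> is_wall H \<and> aff_dim (closure C \<inter> H) = aff_dim (ambient :: (real^'n) set) - 1"

definition facet_refls :: "(real^'n::finite) set \<Rightarrow> (real^'n \<Rightarrow> real^'n) set" where
  "facet_refls C = {refl i j k | i j k. i \<noteq> j \<and> facet_wall C (hyp i j k)}"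

definition cprod :: "('a \<Rightarrow> 'a) list \<Rightarrow> 'a \<Rightarrow> 'a" where
  "cprod ss = foldr (\<circ>) ss id"

definition coxeter_element :: "(real^'n::finite \<Rightarrow> real^'n) \<Rightarrow> bool" where
  "coxeter_element w \<longleftrightarrow> (\<exists>C ss. chamber C \<and> distinct ss \<and> set ss = facet_refls C \<and> w = cprod ss)"

text \<open>Edges of the Coxeter diagram of the facet reflections of C: m(s,t) >= 3, i.e. s,t do not commute.\<close>
definition dedge :: "(real^'n::finite) set \<Rightarrow> (real^'n \<Rightarrow> real^'n) \<Rightarrow> (real^'n \<Rightarrow> real^'n) \<Rightarrow> bool" where
  "dedge C s t \<longleftrightarrow> s \<in> facet_refls C \<and> t \<in> facet_refls C \<and> s \<noteq> t \<and> s \<circ> t \<noteq> t \<circ> s"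

definition acyclic_orientation ::
  "(real^'n::finite) set \<Rightarrow> ((real^'n \<Rightarrow> real^'n) \<times> (real^'n \<Rightarrow> real^'n)) set \<Rightarrow> bool" where
  "acyclic_orientation C Ori \<longleftrightarrow>
     Ori \<subseteq> {(s, t). dedge C s t} \<and>
     (\<forall>s t. dedge C s t \<longrightarrow> ((s, t) \<in> Ori \<longleftrightarrow> (t, s) \<notin> Ori)) \<and>
     acyclic Ori"

definition is_source :: "(real^'n::finite) set \<Rightarrow> ((real^'n \<Rightarrow> real^'n) \<times> (real^'n \<Rightarrow> real^'n)) set
     \<Rightarrow> (real^'n \<Rightarrow> real^'n) \<Rightarrow> bool" where
  "is_source C Ori s \<longleftrightarrow> s \<in> facet_refls C \<and> (\<forall>t. (t, s) \<notin> Ori)"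

definition is_sink :: "(real^'n::finite) set \<Rightarrow> ((real^'n \<Rightarrow> real^'n) \<times> (real^'n \<Rightarrow> real^'n)) set
     \<Rightarrow> (real^'n \<Rightarrow> real^'n) \<Rightarrow> bool" where
  "is_sink C Ori s \<longleftrightarrow> s \<in> facet_refls C \<and> (\<forall>t. (s, t) \<notin> Ori)"

definition produced_by_orientation :: "(real^'n::finite) set \<Rightarrow> ((real^'n \<Rightarrow> real^'n) \<times> (real^'n \<Rightarrow> real^'n)) set
     \<Rightarrow> (real^'n \<Rightarrow> real^'n) \<Rightarrow> bool" where
  "produced_by_orientation C Ori w \<longleftrightarrow>
     (\<exists>ss. distinct ss \<and> set ss = facet_refls C \<and>
        (\<forall>a b. a < length ss \<longrightarrow> b < length ss \<longrightarrow> (ss ! a, ss ! b) \<in> Ori \<longrightarrow> a < b) \<and>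
        w = cprod ss)"

text \<open>Bigon Coxeter elements produced by C (n = CARD('n) - 1). For n >= 2: acyclic orientation
  of the cycle diagram with a unique source and a unique sink (this is exactly the union of the
  (p,q)-bigon cases, p >= q >= 1, p + q = n + 1). For n = 1: any Coxeter element produced by C.\<close>
definition bigon_coxeter_element :: "(real^'n::finite) set \<Rightarrow> (real^'n \<Rightarrow> real^'n) \<Rightarrow> bool" where
  "bigon_coxeter_element C w \<longleftrightarrow>
     (if CARD('n) = 2 then
        (\<exists>ss. distinct ss \<and> set ss = facet_refls C \<and> w = cprod ss)
      else
        (\<exists>Ori. acyclic_orientation C Ori \<and> (\<exists>!s. is_source C Ori s) \<and> (\<exists>!s. is_sink C Ori s) \<and>
             produced_by_orientation C Ori w))"

end

theory Submission
  imports Defs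
begin
definition dl :: "'n \<Rightarrow> 'n \<Rightarrow> 'n \<Rightarrow> real" where
  "dl a b l = (if l = a then 1 else if l = b then -1 else 0)"

lemma refl_nth: "a \<noteq> b \<Longrightarrow> refl a b d x $ l = x $ (Transposition.transpose a b l) + of_int d * dl a b l"
  by (auto simp: refl_def axis_def dl_def Transposition.transpose_def algebra_simps)

lemma refl_invol: "a \<noteq> b \<Longrightarrow> refl a b d (refl a b d x) = x"
  by (auto simp: vec_eq_iff refl_nth dl_def Transposition.transpose_def)

lemma refl_invol': "a \<noteq> b \<Longrightarrow> refl a b d \<circ> refl a b d = id"
  by (auto simp: refl_invol)

lemma refl_swap: "refl b a (-d) = refl a b d"
  by (auto simp: fun_eq_iff vec_eq_iff refl_def axis_def algebra_simps)

lemma refl_conj: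
  assumes "a \<noteq> b" "i \<noteq> j"
  shows "refl a b d (refl i j m (refl a b d x)) =
     refl (Transposition.transpose a b i) (Transposition.transpose a b j)
          (m - d * ((if i = a then 1 else if i = b then -1 else 0) - (if j = a then 1 else if j = b then -1 else 0))) x"
proof -
  have ne: "Transposition.transpose a b i \<noteq> Transposition.transpose a b j" using assms
    by (auto simp: Transposition.transpose_def)
  show ?thesis using assms
    apply (simp add: vec_eq_iff refl_nth ne)
    apply (auto simp: dl_def Transposition.transpose_def algebra_simps)
    done
qed

definition ddc :: "(nat \<Rightarrow> 'n::finite) \<Rightarrow> ('n \<Rightarrow> int) \<Rightarrow> nat \<Rightarrow> int" where
  "ddc e c k = c (e k) - c (e (Suc k mod CARD('n))) - (if k = CARD('n) - 1 then 1 else 0)"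

definition Rf :: "(nat \<Rightarrow> 'n::finite) \<Rightarrow> ('n \<Rightarrow> int) \<Rightarrow> nat \<Rightarrow> real^'n \<Rightarrow> real^'n" where
  "Rf e c k = refl (e k) (e (Suc k mod CARD('n))) (ddc e c k)"

definition ga :: "(nat \<Rightarrow> 'n::finite) \<Rightarrow> nat \<Rightarrow> real^'n" where
  "ga e k = axis (e k) 1 - axis (e (Suc k mod CARD('n))) 1"

definition gv :: "(nat \<Rightarrow> 'n::finite) \<Rightarrow> ('n \<Rightarrow> int) \<Rightarrow> nat \<Rightarrow> real^'n \<Rightarrow> real" where
  "gv e c k y = ga e k \<bullet> y - of_int (ddc e c k)"

definition Alc :: "(nat \<Rightarrow> 'n::finite) \<Rightarrow> ('n \<Rightarrow> int) \<Rightarrow> (real^'n) set" where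
  "Alc e c = {y \<in> ambient. \<forall>k<CARD('n). gv e c k y > 0}"

definition valid :: "(nat \<Rightarrow> 'n::finite) \<Rightarrow> bool" where
  "valid e \<longleftrightarrow> bij_betw e {..<CARD('n)} (UNIV::'n set)"

definition W :: "(nat \<Rightarrow> 'n::finite) \<Rightarrow> ('n \<Rightarrow> int) \<Rightarrow> nat \<Rightarrow> real^'n \<Rightarrow> real" where
  "W e c k y = y $ e k - of_int (c (e k))"

lemma gv_eq: "gv e c k y = y $ e k - y $ e (Suc k mod CARD('n::finite)) - of_int (ddc e c k)"
  for e :: "nat \<Rightarrow> 'n::finite"
  by (simp add: gv_def ga_def inner_diff_right inner_axis inner_commute[of _ y])

lemma gv_W_lt: "Suc k < CARD('n) \<Longrightarrow> gv e c k y = W e c k y - W e c (Suc k) y"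
  for e :: "nat \<Rightarrow> 'n::finite"
  by (simp add: gv_eq W_def ddc_def)

lemma gv_W_last: "gv e c (CARD('n) - 1) y = W e c (CARD('n) - 1) y - W e c 0 y + 1"
  for e :: "nat \<Rightarrow> 'n::finite"
proof -
  have "Suc (CARD('n) - 1) mod CARD('n) = 0" by simp
  then show ?thesis by (simp add: gv_eq W_def ddc_def)
qed

lemma partial_sum:
  fixes e :: "nat \<Rightarrow> 'n::finite"
  assumes "p \<le> q" "q < CARD('n)"
  shows "W e c p y - W e c q y = (\<Sum>k\<in>{p..<q}. gv e c k y)"
  using assms
proof (induction q)
  case 0 then show ?case by simp
next
  case (Suc q)
  show ?case
  proof (cases "p = Suc q")
    case True then show ?thesis by simp
  next
    case False
    then have "p \<le> q" using Suc by simp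
    then have "W e c p y - W e c q y = (\<Sum>k\<in>{p..<q}. gv e c k y)" using Suc by simp
    moreover have "gv e c q y = W e c q y - W e c (Suc q) y" using Suc gv_W_lt by blast
    ultimately show ?thesis using \<open>p \<le> q\<close> by simp
  qed
qed

lemma sum_gv:
  fixes e :: "nat \<Rightarrow> 'n::finite"
  shows "(\<Sum>k<CARD('n). gv e c k y) = 1"
proof -
  obtain m where m: "CARD('n) = Suc m" using not0_implies_Suc by fastforce
  have "(\<Sum>k<CARD('n). gv e c k y) = (\<Sum>k\<in>{0..<CARD('n) - 1}. gv e c k y) + gv e c (CARD('n) - 1) y"
    unfolding m by (simp add: lessThan_atLeast0)
  also have "\<dots> = 1"
    using partial_sum[of 0 "CARD('n) - 1" e c y] gv_W_last[of e c y] by simp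
  finally show ?thesis .
qed

lemma valid_inj: "valid e \<Longrightarrow> k < CARD('n) \<Longrightarrow> k' < CARD('n) \<Longrightarrow> e k = e k' \<longleftrightarrow> k = k'"
  for e :: "nat \<Rightarrow> 'n::finite"
  unfolding valid_def bij_betw_def inj_on_def by auto

lemma valid_surj: "valid e \<Longrightarrow> \<exists>k<CARD('n). e k = i"
  for e :: "nat \<Rightarrow> 'n::finite"
  unfolding valid_def bij_betw_def by (metis UNIV_I imageE lessThan_iff)

lemma sucmod_ne: "2 \<le> N \<Longrightarrow> k < N \<Longrightarrow> Suc k mod N \<noteq> k"
proof (cases "Suc k < N")
  case True then show ?thesis by simp
next
  case False
  assume "2 \<le> N" "k < N"
  then have "Suc k = N" using False by simp
  then show ?thesis using \<open>2 \<le> N\<close> by auto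
qed

lemma point_exists:
  fixes e :: "nat \<Rightarrow> 'n::finite"
  assumes v: "valid e" and st: "(\<Sum>k<CARD('n). t k) = 1"
  shows "\<exists>y\<in>ambient. \<forall>k<CARD('n). gv e c k y = t k"
proof -
  define N where "N = CARD('n)"
  define V where "V q = - (\<Sum>j<q. t j)" for q
  define ie where "ie = inv_into {..<N} e"
  have ie: "ie (e k) = k" if "k < N" for k
    using v that unfolding ie_def valid_def N_def bij_betw_def by (simp add: inv_into_f_f)
  define z :: "real^'n" where "z = (\<chi> i. V (ie i) + of_int (c i))"
  define \<mu> where "\<mu> = (\<Sum>i\<in>UNIV. z $ i) / N"
  define y where "y = z - vec \<mu>"
  have Npos: "N > 0" unfolding N_def by simp
  have "y \<in> ambient"
    unfolding ambient_def y_def \<mu>_def using Npos by (simp add: sum_subtractf N_def)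
  moreover have "gv e c k y = t k" if k: "k < N" for k
  proof (cases "Suc k < N")
    case True
    then have "Suc k mod N = Suc k" by simp
    then show ?thesis using True k
      by (simp add: gv_eq y_def z_def ie ddc_def N_def[symmetric] V_def)
  next
    case False
    then have kk0: "Suc k = N" using k by simp
    then have kk: "k = N - 1" "Suc k mod N = 0" by auto
    have "(\<Sum>j<N. t j) = (\<Sum>j<N - 1. t j) + t (N - 1)"
      using Npos by (metis Suc_pred' sum.lessThan_Suc)
    then show ?thesis using kk Npos st
      by (simp add: gv_eq y_def z_def ie ddc_def N_def[symmetric] V_def)
  qed
  ultimately show ?thesis unfolding N_def by blast
qed

lemma Alc_gap:
  fixes e :: "nat \<Rightarrow> 'n::finite"
  assumes y: "y \<in> Alc e c" and pq: "p < q" "q < CARD('n)"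
  shows "0 < W e c p y - W e c q y \<and> W e c p y - W e c q y < 1"
proof -
  have pos: "\<And>k. k < CARD('n) \<Longrightarrow> gv e c k y > 0" using y by (auto simp: Alc_def)
  have eq: "W e c p y - W e c q y = (\<Sum>k\<in>{p..<q}. gv e c k y)" using partial_sum[of p q e c y] pq by simp
  have "(\<Sum>k\<in>{p..<q}. gv e c k y) > 0"
    by (rule sum_pos) (use pq pos in auto)
  moreover have "(\<Sum>k\<in>{p..<q}. gv e c k y) < 1"
  proof -
    have sub: "{p..<q} \<subseteq> {..<CARD('n)} - {CARD('n) - 1}" using pq by auto
    have "(\<Sum>k\<in>{p..<q}. gv e c k y) \<le> (\<Sum>k\<in>{..<CARD('n)} - {CARD('n) - 1}. gv e c k y)"
      by (rule sum_mono2) (use sub pos in \<open>auto intro: less_imp_le\<close>)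
    also have "\<dots> = (\<Sum>k<CARD('n). gv e c k y) - gv e c (CARD('n) - 1) y"
      by (subst sum_diff1) auto
    also have "\<dots> < 1" using sum_gv[of e c y] pos[of "CARD('n) - 1"] by simp
    finally show ?thesis .
  qed
  ultimately show ?thesis using eq by simp
qed

lemma Alc_not_hyp:
  fixes e :: "nat \<Rightarrow> 'n::finite"
  assumes v: "valid e" and y: "y \<in> Alc e c" and ij: "i \<noteq> j"
  shows "y \<notin> hyp i j m"
proof
  assume h: "y \<in> hyp i j m"
  obtain p where p: "p < CARD('n)" "e p = i" using valid_surj[OF v] by blast
  obtain q where q: "q < CARD('n)" "e q = j" using valid_surj[OF v] by blast
  have yij: "y $ i - y $ j = of_int m" using h by (simp add: hyp_def)
  have "p \<noteq> q" using p q ij by auto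
  then consider "p < q" | "q < p" by linarith
  then show False
  proof cases
    case 1
    have "W e c p y - W e c q y = of_int (m - c i + c j)" using yij p q by (simp add: W_def)
    then show False using Alc_gap[OF y 1 q(1)] by (simp only: of_int_0_less_iff of_int_less_1_iff) linarith
  next
    case 2
    have "W e c q y - W e c p y = of_int (- m - c j + c i)" using yij p q by (simp add: W_def)
    then show False using Alc_gap[OF y 2 p(1)] by (simp only: of_int_0_less_iff of_int_less_1_iff) linarith
  qed
qed

lemma ambient_eq: "(ambient :: (real^'n::finite) set) = {x. (vec 1 :: real^'n) \<bullet> x = 0}"
  by (simp add: ambient_def inner_vec_def)

lemma Alc_eq: "Alc e c = ambient \<inter> (\<Inter>k\<in>{..<CARD('n)}. {y. ga e k \<bullet> y > of_int (ddc e c k)})"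
  for e :: "nat \<Rightarrow> 'n::finite"
  by (auto simp: Alc_def gv_def)

lemma convex_Alc: "convex (Alc e c)"
  unfolding Alc_eq ambient_eq
  by (intro convex_Int convex_INT convex_hyperplane convex_halfspace_gt ballI)

lemma hyp_gv:
  fixes e :: "nat \<Rightarrow> 'n::finite"
  shows "hyp (e k) (e (Suc k mod CARD('n))) (ddc e c k) = {y \<in> ambient. gv e c k y = 0}"
  by (auto simp: hyp_def gv_eq)

lemma Alc_point:
  fixes e :: "nat \<Rightarrow> 'n::finite"
  assumes "valid e"
  shows "\<exists>y. y \<in> Alc e c"
proof -
  have "(\<Sum>k<CARD('n). 1 / real CARD('n)) = 1" by simp
  from point_exists[OF assms this, of c] obtain y where "y \<in> ambient" "\<forall>k<CARD('n). gv e c k y = 1 / real CARD('n)"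
    by blast
  then show ?thesis by (auto simp: Alc_def)
qed

lemma Alc_chamber:
  fixes e :: "nat \<Rightarrow> 'n::finite"
  assumes v: "valid e" and N: "2 \<le> CARD('n)"
  shows "chamber (Alc e c)"
  unfolding chamber_def in_components_maximal
proof (intro conjI allI impI)
  show "Alc e c \<noteq> {}" using Alc_point[OF v] by blast
  show sub: "Alc e c \<subseteq> ambient - \<Union>{H. is_wall H}"
    using Alc_not_hyp[OF v] by (auto simp: Alc_def is_wall_def)
  show "connected (Alc e c)" by (simp add: convex_Alc convex_connected)
  fix D assume D: "D \<noteq> {} \<and> Alc e c \<subseteq> D \<and> D \<subseteq> ambient - \<Union>{H. is_wall H} \<and> connected D"
  obtain p0 where p0: "p0 \<in> Alc e c" using Alc_point[OF v] by blast
  have "D \<subseteq> Alc e c"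
  proof
    fix y assume yD: "y \<in> D"
    have ya: "y \<in> ambient" using yD D by auto
    have "gv e c k y > 0" if k: "k < CARD('n)" for k
    proof (rule ccontr)
      assume "\<not> gv e c k y > 0"
      then have "ga e k \<bullet> y \<le> of_int (ddc e c k)" by (simp add: gv_def)
      moreover have "of_int (ddc e c k) \<le> ga e k \<bullet> p0" using p0 k by (auto simp: Alc_def gv_def)
      moreover have "p0 \<in> D" using p0 D by auto
      ultimately obtain z where z: "z \<in> D" "ga e k \<bullet> z = of_int (ddc e c k)"
        using connected_ivt_hyperplane[of D y p0 "ga e k" "of_int (ddc e c k)"] D yD by blast
      have za: "z \<in> ambient" using z D by auto
      have ne: "e k \<noteq> e (Suc k mod CARD('n))"
        using valid_inj[OF v k, of "Suc k mod CARD('n)"] sucmod_ne[OF N k] by simp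
      have "z \<in> hyp (e k) (e (Suc k mod CARD('n))) (ddc e c k)"
        using za z by (simp add: hyp_gv gv_def)
      then have "z \<in> \<Union>{H. is_wall H}" using ne by (auto simp: is_wall_def)
      then show False using z D by auto
    qed
    then show "y \<in> Alc e c" using ya by (simp add: Alc_def)
  qed
  then show "D = Alc e c" using D by blast
qed

lemma sort_exists:
  fixes f :: "'n::finite \<Rightarrow> real"
  assumes inj: "inj f"
  shows "\<exists>e::nat \<Rightarrow> 'n. valid e \<and> (\<forall>k k'. k < k' \<longrightarrow> k' < CARD('n) \<longrightarrow> f (e k') < f (e k))"
proof -
  define N where "N = CARD('n)"
  define L where "L = sorted_list_of_set (range f)"
  have len: "length L = N" unfolding L_def N_def using inj by (simp add: card_image)
  have sL: "set L = range f" unfolding L_def by simp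
  have srt: "sorted_wrt (<) L" unfolding L_def by simp
  define e where "e k = inv f (L ! (N - 1 - k))" for k
  have fe: "f (e k) = L ! (N - 1 - k)" if "k < N" for k
  proof -
    have "L ! (N - 1 - k) \<in> range f" 
    proof -
      have "N - 1 - k < length L" using len that by simp
      then show ?thesis using sL nth_mem by blast
    qed
    then show ?thesis unfolding e_def by (simp add: f_inv_into_f)
  qed
  have dec: "f (e k') < f (e k)" if "k < k'" "k' < N" for k k'
  proof -
    have "L ! (N - 1 - k') < L ! (N - 1 - k)"
      by (rule sorted_wrt_nth_less[OF srt]) (use that len in auto)
    then show ?thesis using fe that by simp
  qed
  have injE: "inj_on e {..<N}"
  proof (rule inj_onI)
    fix k k' assume "k \<in> {..<N}" "k' \<in> {..<N}" "e k = e k'"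
    then show "k = k'" using dec by (metis lessThan_iff linorder_neqE_nat order_less_irrefl)
  qed
  have "e ` {..<N} = UNIV"
    by (rule card_subset_eq) (use injE in \<open>auto simp: card_image N_def\<close>)
  then have "valid e" unfolding valid_def bij_betw_def using injE N_def by simp
  then show ?thesis using dec N_def by blast
qed

lemma chamber_Alc:
  fixes C :: "(real^'n::finite) set"
  assumes N: "2 \<le> CARD('n)" and C: "chamber C"
  shows "\<exists>e c. valid e \<and> C = Alc e c"
proof -
  let ?S = "ambient - \<Union>{H. is_wall H} :: (real^'n) set"
  have Cc: "C \<in> components ?S" using C by (simp add: chamber_def)
  obtain x0 where x0: "x0 \<in> C" using in_components_nonempty[OF Cc] by blast
  have x0S: "x0 \<in> ?S" using in_components_subset[OF Cc] x0 by blast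
  define c where "c i = floor (x0 $ i)" for i
  define f where "f i = x0 $ i - of_int (c i)" for i
  have f01: "0 \<le> f i \<and> f i < 1" for i unfolding f_def c_def by linarith
  have "inj f"
  proof (rule injI)
    fix i j assume fij: "f i = f j"
    show "i = j"
    proof (rule ccontr)
      assume ij: "i \<noteq> j"
      have "x0 \<in> hyp i j (c i - c j)" using x0S fij by (simp add: hyp_def f_def)
      then show False using x0S ij by (auto simp: is_wall_def)
    qed
  qed
  then obtain e :: "nat \<Rightarrow> 'n" where v: "valid e" and dec: "\<forall>k k'. k < k' \<longrightarrow> k' < CARD('n) \<longrightarrow> f (e k') < f (e k)"
    using sort_exists by blast
  have Wf: "W e c k x0 = f (e k)" for k by (simp add: W_def f_def)
  have "x0 \<in> Alc e c"
  proof -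
    have "gv e c k x0 > 0" if k: "k < CARD('n)" for k
    proof (cases "Suc k < CARD('n)")
      case True then show ?thesis using gv_W_lt[OF True] dec Wf by simp
    next
      case False
      then have "k = CARD('n) - 1" using k by simp
      then show ?thesis using gv_W_last[of e c x0] Wf f01[of "e (CARD('n) - 1)"] f01[of "e 0"] by simp
    qed
    then show ?thesis using x0S by (simp add: Alc_def)
  qed
  then have "C = Alc e c"
    using components_eq[OF Cc Alc_chamber[OF v N, of c, unfolded chamber_def]] x0 by blast
  then show ?thesis using v by blast
qed

definition Cl :: "(nat \<Rightarrow> 'n::finite) \<Rightarrow> ('n \<Rightarrow> int) \<Rightarrow> (real^'n) set" where
  "Cl e c = {y \<in> ambient. \<forall>k<CARD('n). gv e c k y \<ge> 0}"

lemma closed_Cl: "closed (Cl e c)" for e :: "nat \<Rightarrow> 'n::finite"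
proof -
  have "Cl e c = ambient \<inter> (\<Inter>k\<in>{..<CARD('n)}. {y. ga e k \<bullet> y \<ge> of_int (ddc e c k)})"
    by (auto simp: Cl_def gv_def)
  moreover have "closed (ambient \<inter> (\<Inter>k\<in>{..<CARD('n)}. {y. ga e k \<bullet> y \<ge> of_int (ddc e c k)}))"
    unfolding ambient_eq by (intro closed_Int closed_INT closed_hyperplane closed_halfspace_ge ballI)
  ultimately show ?thesis by simp
qed

lemma closure_sub_Cl: "closure (Alc e c) \<subseteq> Cl e c" for e :: "nat \<Rightarrow> 'n::finite"
  apply (rule closure_minimal)
   apply (force simp: Alc_def Cl_def)
  by (rule closed_Cl)

lemma gv_comb: "gv e c k (y + t *\<^sub>R (p - y)) = (1 - t) * gv e c k y + t * gv e c k p"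
  by (simp add: gv_def inner_add_right inner_diff_right algebra_simps)

lemma ambient_comb: "y \<in> ambient \<Longrightarrow> p \<in> ambient \<Longrightarrow> y + t *\<^sub>R (p - y) \<in> ambient"
  by (simp add: ambient_def sum.distrib sum_subtractf sum_distrib_left[symmetric])

lemma Cl_sub_closure:
  fixes e :: "nat \<Rightarrow> 'n::finite"
  assumes v: "valid e"
  shows "Cl e c \<subseteq> closure (Alc e c)"
proof
  fix y assume y: "y \<in> Cl e c"
  obtain p where p: "p \<in> Alc e c" using Alc_point[OF v] by blast
  show "y \<in> closure (Alc e c)"
    unfolding closure_approachable
  proof (intro allI impI)
    fix \<epsilon> :: real assume \<epsilon>: "\<epsilon> > 0"
    define t where "t = min 1 (\<epsilon> / (2 * (norm (p - y) + 1)))"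
    have "2 * (norm (p - y) + 1) > 0" by (smt (verit) norm_ge_zero)
    then have "\<epsilon> / (2 * (norm (p - y) + 1)) > 0" using \<epsilon> by simp
    then have t0: "0 < t" "t \<le> 1" unfolding t_def by auto
    have "y + t *\<^sub>R (p - y) \<in> Alc e c"
    proof -
      have "gv e c k (y + t *\<^sub>R (p - y)) > 0" if k: "k < CARD('n)" for k
      proof -
        have "gv e c k y \<ge> 0" "gv e c k p > 0" using y p k by (auto simp: Cl_def Alc_def)
        then have "(1 - t) * gv e c k y \<ge> 0" "t * gv e c k p > 0" using t0 by auto
        then show ?thesis by (simp add: gv_comb)
      qed
      moreover have "y + t *\<^sub>R (p - y) \<in> ambient" using y p by (auto simp: Cl_def Alc_def ambient_comb)
      ultimately show ?thesis by (simp add: Alc_def)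
    qed
    moreover have "dist (y + t *\<^sub>R (p - y)) y < \<epsilon>"
    proof -
      define n where "n = norm (p - y)"
      have n0: "n \<ge> 0" unfolding n_def by simp
      have d: "dist (y + t *\<^sub>R (p - y)) y = t * n" using t0 by (simp add: dist_norm n_def)
      have "t * n \<le> (\<epsilon> / (2 * (n + 1))) * n"
        by (rule mult_right_mono) (use n0 in \<open>auto simp: t_def n_def\<close>)
      also have "\<dots> = \<epsilon> * (n / (2 * (n + 1)))" by simp
      also have "\<dots> < \<epsilon> * 1"
      proof (rule mult_strict_left_mono)
        show "n / (2 * (n + 1)) < 1" using n0 by (simp add: divide_less_eq)
      qed (use \<epsilon> in auto)
      finally show ?thesis using d by simp
    qed
    ultimately show "\<exists>x\<in>Alc e c. dist x y < \<epsilon>" by blast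
  qed
qed

lemma closure_Alc: "valid e \<Longrightarrow> closure (Alc e c) = Cl e c" for e :: "nat \<Rightarrow> 'n::finite"
  using closure_sub_Cl Cl_sub_closure by blast

lemma aff_dim_ambient: "aff_dim (ambient :: (real^'n::finite) set) = int CARD('n) - 1"
proof -
  have "(vec 1 :: real^'n) \<noteq> 0" by (simp add: vec_eq_iff)
  then show ?thesis unfolding ambient_eq by simp
qed

lemma gv_set: "{y. gv e c k y = 0} = {y. ga e k \<bullet> y = of_int (ddc e c k)}"
  by (auto simp: gv_def)

lemma witness1:
  fixes e :: "nat \<Rightarrow> 'n::finite"
  assumes v: "valid e" and N: "2 \<le> CARD('n)" and k: "k < CARD('n)"
  shows "\<exists>y\<in>ambient. gv e c k y = 0 \<and> (\<forall>j<CARD('n). j \<noteq> k \<longrightarrow> gv e c j y > 0)"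
proof -
  define t where "t j = (if j = k then 0 else 1 / (real CARD('n) - 1))" for j
  have "(\<Sum>j<CARD('n). t j) = (\<Sum>j\<in>{..<CARD('n)} - {k}. 1 / (real CARD('n) - 1))"
    unfolding t_def by (rule sum.mono_neutral_cong_right) auto
  also have "\<dots> = 1" using k N by (simp add: card_Diff_singleton of_nat_diff)
  finally obtain y where y: "y \<in> ambient" "\<forall>j<CARD('n). gv e c j y = t j"
    using point_exists[OF v] by blast
  have "real CARD('n) - 1 > 0" using N by simp
  then have "gv e c j y > 0" if "j < CARD('n)" "j \<noteq> k" for j using y that by (simp add: t_def)
  moreover have "gv e c k y = 0" using y k by (simp add: t_def)
  ultimately show ?thesis using y by blast
qed

lemma witness2:
  fixes e :: "nat \<Rightarrow> 'n::finite"
  assumes v: "valid e" and k: "k1 < CARD('n)" "k2 < CARD('n)" "k1 \<noteq> k2"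
  shows "\<exists>y\<in>ambient. gv e c k1 y = 0 \<and> gv e c k2 y = 1"
proof -
  define t where "t j = (if j = k2 then 1 else 0::real)" for j
  have "(\<Sum>j<CARD('n). t j) = 1" unfolding t_def using k by simp
  then obtain y where y: "y \<in> ambient" "\<forall>j<CARD('n). gv e c j y = t j"
    using point_exists[OF v] by blast
  have "gv e c k1 y = 0" "gv e c k2 y = 1" using y k by (auto simp: t_def)
  then show ?thesis using y by blast
qed

lemma affine_ambient: "affine (ambient :: (real^'n::finite) set)"
  unfolding ambient_eq by (rule affine_hyperplane)

lemma dim_one:
  fixes e :: "nat \<Rightarrow> 'n::finite"
  assumes v: "valid e" and N: "2 \<le> CARD('n)" and k: "k < CARD('n)"
  shows "aff_dim (ambient \<inter> {y. gv e c k y = 0}) = int CARD('n) - 2"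
proof -
  obtain y where y: "y \<in> ambient" "gv e c k y = 0" using witness1[OF v N k] by blast
  define k2 where "k2 = (if k = 0 then 1 else 0::nat)"
  have k2: "k2 < CARD('n)" "k2 \<noteq> k" using N k unfolding k2_def by auto
  obtain z where z: "z \<in> ambient" "gv e c k2 z = 0" "gv e c k z = 1" using witness2[OF v k2(1) k k2(2)] by blast
  show ?thesis unfolding gv_set
    apply (subst aff_dim_affine_Int_hyperplane[OF affine_ambient])
    using y z by (auto simp: aff_dim_ambient gv_def)
qed

lemma dim_two:
  fixes e :: "nat \<Rightarrow> 'n::finite"
  assumes v: "valid e" and N: "2 \<le> CARD('n)" and k: "k1 < CARD('n)" "k2 < CARD('n)" "k1 \<noteq> k2"
  shows "aff_dim (ambient \<inter> {y. gv e c k1 y = 0} \<inter> {y. gv e c k2 y = 0}) \<le> int CARD('n) - 3"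
proof -
  obtain z where z: "z \<in> ambient" "gv e c k1 z = 0" "gv e c k2 z = 1" using witness2[OF v k] by blast
  have aff: "affine (ambient \<inter> {y. gv e c k1 y = 0})"
    unfolding gv_set by (intro affine_Int affine_ambient affine_hyperplane)
  have d1: "aff_dim (ambient \<inter> {y. gv e c k1 y = 0}) = int CARD('n) - 2" using dim_one[OF v N k(1)] .
  have nsub: "\<not> (ambient \<inter> {y. gv e c k1 y = 0} \<subseteq> {y. ga e k2 \<bullet> y = of_int (ddc e c k2)})"
    using z by (auto simp: gv_def)
  have "aff_dim (ambient \<inter> {y. gv e c k1 y = 0} \<inter> {y. ga e k2 \<bullet> y = of_int (ddc e c k2)}) \<le> int CARD('n) - 3"
    unfolding aff_dim_affine_Int_hyperplane[OF aff] using nsub d1 N by auto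
  then show ?thesis unfolding gv_set[of e c k2] .
qed

lemma eK_ne:
  fixes e :: "nat \<Rightarrow> 'n::finite"
  assumes v: "valid e" and N: "2 \<le> CARD('n)" and k: "k < CARD('n)"
  shows "e k \<noteq> e (Suc k mod CARD('n))"
  using valid_inj[OF v k, of "Suc k mod CARD('n)"] sucmod_ne[OF N k] by simp

lemma facet_yes:
  fixes e :: "nat \<Rightarrow> 'n::finite"
  assumes v: "valid e" and N: "2 \<le> CARD('n)" and k: "k < CARD('n)"
  shows "facet_wall (Alc e c) (hyp (e k) (e (Suc k mod CARD('n))) (ddc e c k))"
  unfolding facet_wall_def
proof
  show "is_wall (hyp (e k) (e (Suc k mod CARD('n))) (ddc e c k))"
    using eK_ne[OF v N k] by (auto simp: is_wall_def)
  let ?A = "ambient \<inter> {y. gv e c k y = 0}"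
  have clH: "closure (Alc e c) \<inter> hyp (e k) (e (Suc k mod CARD('n))) (ddc e c k) = Cl e c \<inter> ?A"
    unfolding closure_Alc[OF v, of c] hyp_gv[of e k c] by auto
  have dA: "aff_dim ?A = int CARD('n) - 2" using dim_one[OF v N k] .
  have le: "aff_dim (Cl e c \<inter> ?A) \<le> aff_dim ?A" by (rule aff_dim_subset) auto
  define Op where "Op = (\<Inter>j\<in>{..<CARD('n)} - {k}. {y. ga e j \<bullet> y > of_int (ddc e c j)})"
  have oO: "open Op" unfolding Op_def by (intro open_INT open_halfspace_gt ballI) auto
  have cA: "convex ?A" unfolding gv_set ambient_eq by (intro convex_Int convex_hyperplane)
  have ne: "?A \<inter> Op \<noteq> {}"
  proof -
    obtain y where "y \<in> ambient" "gv e c k y = 0" "\<forall>j<CARD('n). j \<noteq> k \<longrightarrow> gv e c j y > 0"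
      using witness1[OF v N k] by blast
    then have "y \<in> ?A \<inter> Op" by (auto simp: Op_def gv_def)
    then show ?thesis by blast
  qed
  have "aff_dim (?A \<inter> Op) = aff_dim ?A" using aff_dim_convex_Int_open[OF cA oO ne] .
  moreover have "?A \<inter> Op \<subseteq> Cl e c \<inter> ?A"
  proof
    fix y assume y: "y \<in> ?A \<inter> Op"
    have "gv e c j y \<ge> 0" if "j < CARD('n)" for j
    proof (cases "j = k")
      case True then show ?thesis using y by simp
    next
      case False
      then have "j \<in> {..<CARD('n)} - {k}" using that by simp
      then have "ga e j \<bullet> y > of_int (ddc e c j)" using y by (auto simp: Op_def)
      then show ?thesis by (simp add: gv_def)
    qed
    then show "y \<in> Cl e c \<inter> ?A" using y by (auto simp: Cl_def)
  qed
  ultimately have ge: "aff_dim ?A \<le> aff_dim (Cl e c \<inter> ?A)" by (metis aff_dim_subset)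
  show "aff_dim (closure (Alc e c) \<inter> hyp (e k) (e (Suc k mod CARD('n))) (ddc e c k)) = aff_dim (ambient :: (real^'n) set) - 1"
    unfolding clH aff_dim_ambient using le ge dA by simp
qed

lemma cl_hyp_cases:
  fixes e :: "nat \<Rightarrow> 'n::finite"
  assumes y: "y \<in> Cl e c" "y \<in> hyp (e p) (e q) m" and pq: "p < q" "q < CARD('n)"
  shows "(m - c (e p) + c (e q) = 0 \<and> (\<forall>k\<in>{p..<q}. gv e c k y = 0)) \<or>
         (m - c (e p) + c (e q) = 1 \<and> (\<forall>k<CARD('n). k \<notin> {p..<q} \<longrightarrow> gv e c k y = 0))"
proof -
  define M where "M = m - c (e p) + c (e q)"
  have nn: "\<And>k. k < CARD('n) \<Longrightarrow> gv e c k y \<ge> 0" using y by (auto simp: Cl_def)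
  have "W e c p y - W e c q y = of_int M" using y by (simp add: hyp_def W_def M_def)
  then have S: "(\<Sum>k\<in>{p..<q}. gv e c k y) = of_int M" using partial_sum[of p q e c y] pq by simp
  have sub: "{p..<q} \<subseteq> {..<CARD('n)}" using pq by auto
  have S0: "(\<Sum>k\<in>{p..<q}. gv e c k y) \<ge> 0" by (rule sum_nonneg) (use nn pq in auto)
  have S1: "(\<Sum>k\<in>{p..<q}. gv e c k y) \<le> 1"
  proof -
    have "(\<Sum>k\<in>{p..<q}. gv e c k y) \<le> (\<Sum>k<CARD('n). gv e c k y)"
      by (rule sum_mono2) (use sub nn in auto)
    then show ?thesis using sum_gv[of e c y] by simp
  qed
  have "M = 0 \<or> M = 1" using S S0 S1 by (simp only: ) (smt (verit) of_int_le_iff of_int_0 of_int_1)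
  then show ?thesis
  proof
    assume M0: "M = 0"
    then have "\<forall>k\<in>{p..<q}. gv e c k y = 0"
      using S sum_nonneg_eq_0_iff[of "{p..<q}" "\<lambda>k. gv e c k y"] nn pq by auto
    then show ?thesis using M0 M_def by simp
  next
    assume M1: "M = 1"
    have "(\<Sum>k\<in>{..<CARD('n)} - {p..<q}. gv e c k y) = (\<Sum>k<CARD('n). gv e c k y) - (\<Sum>k\<in>{p..<q}. gv e c k y)"
      using sum_diff[OF _ sub] by simp
    also have "\<dots> = 0" using S M1 sum_gv[of e c y] by simp
    finally have "\<forall>k\<in>{..<CARD('n)} - {p..<q}. gv e c k y = 0"
      using sum_nonneg_eq_0_iff[of "{..<CARD('n)} - {p..<q}" "\<lambda>k. gv e c k y"] nn by auto
    then show ?thesis using M1 M_def by auto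
  qed
qed

lemma nonfacet_core:
  fixes e :: "nat \<Rightarrow> 'n::finite"
  assumes v: "valid e" and N: "3 \<le> CARD('n)" and pq: "p < q" "q < CARD('n)"
    and ex1: "\<not> (q = Suc p \<and> m = c (e p) - c (e q))"
    and ex2: "\<not> (p = 0 \<and> q = CARD('n) - 1 \<and> m = 1 + c (e 0) - c (e (CARD('n) - 1)))"
  shows "aff_dim (Cl e c \<inter> hyp (e p) (e q) m) < int CARD('n) - 2"
proof -
  have N2: "2 \<le> CARD('n)" using N by simp
  define M where "M = m - c (e p) + c (e q)"
  have two: "aff_dim (Cl e c \<inter> hyp (e p) (e q) m) < int CARD('n) - 2"
    if k: "k1 < CARD('n)" "k2 < CARD('n)" "k1 \<noteq> k2"
    and sub: "Cl e c \<inter> hyp (e p) (e q) m \<subseteq> ambient \<inter> {y. gv e c k1 y = 0} \<inter> {y. gv e c k2 y = 0}" for k1 k2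
  proof -
    have "aff_dim (Cl e c \<inter> hyp (e p) (e q) m) \<le> aff_dim (ambient \<inter> {y. gv e c k1 y = 0} \<inter> {y. gv e c k2 y = 0})"
      by (rule aff_dim_subset[OF sub])
    also have "\<dots> \<le> int CARD('n) - 3" by (rule dim_two[OF v N2 k])
    finally show ?thesis by simp
  qed
  consider (empty) "Cl e c \<inter> hyp (e p) (e q) m = {}" | (nonempty) y where "y \<in> Cl e c \<inter> hyp (e p) (e q) m" by blast
  then show ?thesis
  proof cases
    case empty then show ?thesis using N by simp
  next
    case nonempty
    have cases_y: "(M = 0 \<and> (\<forall>k\<in>{p..<q}. gv e c k z = 0)) \<or> (M = 1 \<and> (\<forall>k<CARD('n). k \<notin> {p..<q} \<longrightarrow> gv e c k z = 0))"
      if "z \<in> Cl e c \<inter> hyp (e p) (e q) m" for z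
      using cl_hyp_cases[of z e c p q m] that pq unfolding M_def by auto
    have amb: "z \<in> ambient" if "z \<in> Cl e c \<inter> hyp (e p) (e q) m" for z using that by (auto simp: Cl_def)
    consider (M0) "M = 0" | (M1) "M = 1" using cases_y[OF nonempty] by blast
    then show ?thesis
    proof cases
      case M0
      then have "q \<noteq> Suc p" using ex1 M_def by auto
      then have "Suc p < q" using pq by simp
      show ?thesis
      proof (rule two[of p "Suc p"])
        show "p < CARD('n)" "Suc p < CARD('n)" "p \<noteq> Suc p" using pq \<open>Suc p < q\<close> by auto
        show "Cl e c \<inter> hyp (e p) (e q) m \<subseteq> ambient \<inter> {y. gv e c p y = 0} \<inter> {y. gv e c (Suc p) y = 0}"
        proof
          fix z assume z: "z \<in> Cl e c \<inter> hyp (e p) (e q) m"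
          then have "\<forall>k\<in>{p..<q}. gv e c k z = 0" using cases_y[OF z] M0 by auto
          then show "z \<in> ambient \<inter> {y. gv e c p y = 0} \<inter> {y. gv e c (Suc p) y = 0}"
            using amb[OF z] \<open>Suc p < q\<close> by auto
        qed
      qed
    next
      case M1
      show ?thesis
      proof (cases "p = 0")
        case True
        then have "q \<noteq> CARD('n) - 1" using ex2 M1 M_def by auto
        then have q': "q < CARD('n) - 1" using pq by simp
        show ?thesis
        proof (rule two[of q "CARD('n) - 1"])
          show "q < CARD('n)" "CARD('n) - 1 < CARD('n)" "q \<noteq> CARD('n) - 1" using q' by auto
          show "Cl e c \<inter> hyp (e p) (e q) m \<subseteq> ambient \<inter> {y. gv e c q y = 0} \<inter> {y. gv e c (CARD('n) - 1) y = 0}"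
        proof
          fix z assume z: "z \<in> Cl e c \<inter> hyp (e p) (e q) m"
          then have "\<forall>k<CARD('n). k \<notin> {p..<q} \<longrightarrow> gv e c k z = 0" using cases_y[OF z] M1 by auto
          then show "z \<in> ambient \<inter> {y. gv e c q y = 0} \<inter> {y. gv e c (CARD('n) - 1) y = 0}"
            using amb[OF z] q' pq by auto
        qed
        qed
      next
        case False
        show ?thesis
        proof (rule two[of 0 "CARD('n) - 1"])
          show "0 < CARD('n)" "CARD('n) - 1 < CARD('n)" "0 \<noteq> CARD('n) - 1" using N by auto
          show "Cl e c \<inter> hyp (e p) (e q) m \<subseteq> ambient \<inter> {y. gv e c 0 y = 0} \<inter> {y. gv e c (CARD('n) - 1) y = 0}"
        proof
          fix z assume z: "z \<in> Cl e c \<inter> hyp (e p) (e q) m"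
          then have "\<forall>k<CARD('n). k \<notin> {p..<q} \<longrightarrow> gv e c k z = 0" using cases_y[OF z] M1 by auto
          moreover have "CARD('n) - 1 < CARD('n)" "CARD('n) - 1 \<notin> {p..<q}" using pq by auto
          ultimately show "z \<in> ambient \<inter> {y. gv e c 0 y = 0} \<inter> {y. gv e c (CARD('n) - 1) y = 0}"
            using amb[OF z] False pq by auto
        qed
        qed
      qed
    qed
  qed
qed

lemma hyp_swap: "hyp j i (-m) = hyp i j m"
  by (auto simp: hyp_def)

lemma nonfacet:
  fixes e :: "nat \<Rightarrow> 'n::finite"
  assumes v: "valid e" and N: "3 \<le> CARD('n)" and ij: "i \<noteq> j"
    and ex: "\<forall>k<CARD('n). \<not> (i = e k \<and> j = e (Suc k mod CARD('n)) \<and> m = ddc e c k) \<and>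
                          \<not> (j = e k \<and> i = e (Suc k mod CARD('n)) \<and> m = - ddc e c k)"
  shows "\<not> facet_wall (Alc e c) (hyp i j m)"
proof
  assume fw: "facet_wall (Alc e c) (hyp i j m)"
  have N1: "CARD('n) - 1 < CARD('n)" "Suc (CARD('n) - 1) mod CARD('n) = 0" using N by auto
  obtain p where p: "p < CARD('n)" "e p = i" using valid_surj[OF v] by blast
  obtain q where q: "q < CARD('n)" "e q = j" using valid_surj[OF v] by blast
  have "p \<noteq> q" using p q ij by auto
  have "aff_dim (Cl e c \<inter> hyp i j m) < int CARD('n) - 2"
  proof (cases "p < q")
    case True
    have ex1: "\<not> (q = Suc p \<and> m = c (e p) - c (e q))"
    proof
      assume a: "q = Suc p \<and> m = c (e p) - c (e q)"
      then have s: "Suc p mod CARD('n) = q" "p \<noteq> CARD('n) - 1" using q by auto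
      have "\<not> (i = e p \<and> j = e (Suc p mod CARD('n)) \<and> m = ddc e c p)" using ex p by blast
      then show False using s p q a by (simp add: ddc_def)
    qed
    have ex2: "\<not> (p = 0 \<and> q = CARD('n) - 1 \<and> m = 1 + c (e 0) - c (e (CARD('n) - 1)))"
    proof
      assume a: "p = 0 \<and> q = CARD('n) - 1 \<and> m = 1 + c (e 0) - c (e (CARD('n) - 1))"
      have "\<not> (j = e (CARD('n) - 1) \<and> i = e (Suc (CARD('n) - 1) mod CARD('n)) \<and> m = - ddc e c (CARD('n) - 1))"
        using ex N1(1) by blast
      then show False using a p q N1 by (simp add: ddc_def)
    qed
    show ?thesis using nonfacet_core[OF v N True q(1) ex1 ex2] p q by simp
  next
    case False
    then have qp: "q < p" using \<open>p \<noteq> q\<close> by simp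
    have ex1: "\<not> (p = Suc q \<and> - m = c (e q) - c (e p))"
    proof
      assume a: "p = Suc q \<and> - m = c (e q) - c (e p)"
      then have s: "Suc q mod CARD('n) = p" "q \<noteq> CARD('n) - 1" using p by auto
      have a2: "m = c i - c j" using a p q by simp
      have "\<not> (j = e q \<and> i = e (Suc q mod CARD('n)) \<and> m = - ddc e c q)" using ex q by blast
      then show False using s p q a2 by (simp add: ddc_def)
    qed
    have ex2: "\<not> (q = 0 \<and> p = CARD('n) - 1 \<and> - m = 1 + c (e 0) - c (e (CARD('n) - 1)))"
    proof
      assume a: "q = 0 \<and> p = CARD('n) - 1 \<and> - m = 1 + c (e 0) - c (e (CARD('n) - 1))"
      have "\<not> (i = e (CARD('n) - 1) \<and> j = e (Suc (CARD('n) - 1) mod CARD('n)) \<and> m = ddc e c (CARD('n) - 1))"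
        using ex N1(1) by blast
      then show False using a p q N1 by (simp add: ddc_def)
    qed
    show ?thesis using nonfacet_core[OF v N qp p(1) ex1 ex2] p q hyp_swap[of j i m] by simp
  qed
  moreover have "aff_dim (Cl e c \<inter> hyp i j m) = int CARD('n) - 2"
    using fw unfolding facet_wall_def closure_Alc[OF v] aff_dim_ambient by simp
  ultimately show False by simp
qed

lemma facet_refls_Alc:
  fixes e :: "nat \<Rightarrow> 'n::finite"
  assumes v: "valid e" and N: "3 \<le> CARD('n)"
  shows "facet_refls (Alc e c) = Rf e c ` {..<CARD('n)}"
proof
  have N2: "2 \<le> CARD('n)" using N by simp
  show "Rf e c ` {..<CARD('n)} \<subseteq> facet_refls (Alc e c)"
  proof
    fix r assume "r \<in> Rf e c ` {..<CARD('n)}"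
    then obtain k where k: "k < CARD('n)" "r = Rf e c k" by auto
    then show "r \<in> facet_refls (Alc e c)"
      unfolding facet_refls_def Rf_def using facet_yes[OF v N2 k(1)] eK_ne[OF v N2 k(1)] by blast
  qed
  show "facet_refls (Alc e c) \<subseteq> Rf e c ` {..<CARD('n)}"
  proof
    fix r assume "r \<in> facet_refls (Alc e c)"
    then obtain i j m where r: "r = refl i j m" "i \<noteq> j" "facet_wall (Alc e c) (hyp i j m)"
      unfolding facet_refls_def by blast
    then obtain k where k: "k < CARD('n)" "(i = e k \<and> j = e (Suc k mod CARD('n)) \<and> m = ddc e c k) \<or>
                          (j = e k \<and> i = e (Suc k mod CARD('n)) \<and> m = - ddc e c k)"
      using nonfacet[OF v N r(2)] by blast
    then have "r = Rf e c k" using r refl_swap[of "e (Suc k mod CARD('n))" "e k" "ddc e c k"]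
      unfolding Rf_def by auto
    then show "r \<in> Rf e c ` {..<CARD('n)}" using k by blast
  qed
qed

lemma refl_comm_disj:
  assumes "a \<noteq> b" "i \<noteq> j" "a \<noteq> i" "a \<noteq> j" "b \<noteq> i" "b \<noteq> j"
  shows "refl a b d \<circ> refl i j m = refl i j m \<circ> refl a b d"
  using assms by (auto simp: fun_eq_iff vec_eq_iff refl_nth dl_def Transposition.transpose_def)

lemma refl_noncomm:
  assumes "a \<noteq> b" "b \<noteq> c" "a \<noteq> c"
  shows "refl a b d \<circ> refl b c f \<noteq> refl b c f \<circ> refl a b d"
proof
  assume eq: "refl a b d \<circ> refl b c f = refl b c f \<circ> refl a b d"
  have h: "refl a b d (refl b c f x) $ a = refl b c f (refl a b d x) $ a" for x
    using fun_cong[OF eq, of x] by simp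
  have h0: "of_int f + of_int d = (of_int d :: real)"
    using h[of 0] assms by (simp add: refl_nth dl_def Transposition.transpose_def)
  have h1: "1 + of_int f + of_int d = (of_int d :: real)"
    using h[of "axis c 1"] assms by (simp add: refl_nth dl_def Transposition.transpose_def axis_def)
  show False using h0 h1 by simp
qed

lemma refl_eq_pair:
  assumes ab: "a \<noteq> b" and ij: "i \<noteq> j" and eq: "refl a b d = refl i j m"
  shows "{a, b} = {i, j}"
proof -
  have t: "Transposition.transpose a b l = Transposition.transpose i j l" for l
  proof -
    let ?u = "Transposition.transpose a b l"
    have "refl a b d (axis ?u 1) $ l - refl a b d 0 $ l = refl i j m (axis ?u 1) $ l - refl i j m 0 $ l"
      using eq by simp
    then have "(axis ?u (1::real)) $ ?u = axis ?u 1 $ (Transposition.transpose i j l)"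
      using ab ij by (simp add: refl_nth)
    then show ?thesis by (simp add: axis_def split: if_splits)
  qed
  have "Transposition.transpose i j a = b" using t[of a] by simp
  then have "a \<in> {i, j}" using ab by (auto simp: Transposition.transpose_def split: if_splits)
  moreover have "Transposition.transpose i j b = a" using t[of b] by simp
  then have "b \<in> {i, j}" using ab by (auto simp: Transposition.transpose_def split: if_splits)
  ultimately show ?thesis using ab ij by auto
qed

lemma mod_two_step:
  assumes N: "3 \<le> N" and k: "k < N" "k' < N" and h1: "k = Suc k' mod N" and h2: "k' = Suc k mod N"
  shows False
proof (cases "Suc k < N")
  case True
  have "Suc k mod N = Suc k" using True by (rule mod_less)
  then have k': "k' = Suc k" using h2 by linarith
  show False
  proof (cases "Suc k' < N")
    case True
    have "Suc k' mod N = Suc k'" using True by (rule mod_less)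
    then show False using h1 k' by linarith
  next
    case False then have "Suc k' = N" using k by linarith
    then have "Suc k' mod N = 0" by (metis mod_self)
    then show False using h1 k' N \<open>Suc k' = N\<close> by linarith
  qed
next
  case False
  then have sk: "Suc k = N" using k by linarith
  then have "Suc k mod N = 0" by (metis mod_self)
  then have k'0: "k' = 0" using h2 by linarith
  have "Suc 0 mod N = Suc 0" using N by (intro mod_less) linarith
  then have "k = 1" using h1 k'0 by simp
  then show False using sk N by linarith
qed

abbreviation adj :: "nat \<Rightarrow> nat \<Rightarrow> nat \<Rightarrow> bool" where
  "adj N p q \<equiv> q = Suc p mod N \<or> p = Suc q mod N"

lemma sucmod_inj: "p < N \<Longrightarrow> q < N \<Longrightarrow> Suc p mod N = Suc q mod N \<Longrightarrow> p = q"
proof -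
  assume a: "p < N" "q < N" "Suc p mod N = Suc q mod N"
  have "Suc p mod N = (if Suc p = N then 0 else Suc p)" using a by auto
  moreover have "Suc q mod N = (if Suc q = N then 0 else Suc q)" using a by auto
  ultimately show "p = q" using a by (auto split: if_splits)
qed

lemma Rf_inj:
  fixes e :: "nat \<Rightarrow> 'n::finite"
  assumes v: "valid e" and N: "3 \<le> CARD('n)" and k: "k < CARD('n)" "k' < CARD('n)"
    and eq: "Rf e c k = Rf e c k'"
  shows "k = k'"
proof -
  have N2: "2 \<le> CARD('n)" using N by simp
  let ?K = "Suc k mod CARD('n)" and ?K' = "Suc k' mod CARD('n)"
  have KN: "?K < CARD('n)" "?K' < CARD('n)" using k by auto
  have "{e k, e ?K} = {e k', e ?K'}"
    using refl_eq_pair[OF eK_ne[OF v N2 k(1)] eK_ne[OF v N2 k(2)]] eq unfolding Rf_def by blast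
  then have "(e k = e k' \<and> e ?K = e ?K') \<or> (e k = e ?K' \<and> e ?K = e k')" by (simp add: doubleton_eq_iff)
  then show ?thesis
  proof
    assume "e k = e k' \<and> e ?K = e ?K'"
    then show ?thesis using valid_inj[OF v k] by simp
  next
    assume a: "e k = e ?K' \<and> e ?K = e k'"
    have "k = ?K'" using valid_inj[OF v k(1) KN(2)] a by simp
    moreover have "?K = k'" using valid_inj[OF v KN(1) k(2)] a by simp
    ultimately have "k = ?K'" "?K = k'" by simp_all
    then have False using mod_two_step[OF N k(1) k(2)] by metis
    then show ?thesis ..
  qed
qed

lemma Rf_comm_iff:
  fixes e :: "nat \<Rightarrow> 'n::finite"
  assumes v: "valid e" and N: "3 \<le> CARD('n)" and k: "p < CARD('n)" "q < CARD('n)" "p \<noteq> q"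
  shows "Rf e c p \<circ> Rf e c q = Rf e c q \<circ> Rf e c p \<longleftrightarrow> \<not> adj CARD('n) p q"
proof -
  have N2: "2 \<le> CARD('n)" using N by simp
  let ?P = "Suc p mod CARD('n)" and ?Q = "Suc q mod CARD('n)"
  have PQ: "?P < CARD('n)" "?Q < CARD('n)" using k by auto
  show ?thesis
  proof
    assume comm: "Rf e c p \<circ> Rf e c q = Rf e c q \<circ> Rf e c p"
    show "\<not> adj CARD('n) p q"
    proof
      assume "adj CARD('n) p q"
      then show False
      proof
        assume qP: "q = ?P"
        have "p \<noteq> ?Q"
        proof
          assume "p = ?Q"
          then show False using mod_two_step[OF N k(1) k(2) _ qP] by blast
        qed
        then have "e p \<noteq> e ?Q" using valid_inj[OF v k(1) PQ(2)] by simp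
        then show False using refl_noncomm[of "e p" "e q" "e ?Q" "ddc e c p" "ddc e c q"] comm
          eK_ne[OF v N2 k(1)] eK_ne[OF v N2 k(2)] qP unfolding Rf_def by simp
      next
        assume pQ: "p = ?Q"
        have "q \<noteq> ?P"
        proof
          assume "q = ?P"
          then show False using mod_two_step[OF N k(2) k(1) _ pQ] by blast
        qed
        then have "e q \<noteq> e ?P" using valid_inj[OF v k(2) PQ(1)] by simp
        then show False using refl_noncomm[of "e q" "e p" "e ?P" "ddc e c q" "ddc e c p"] comm
          eK_ne[OF v N2 k(1)] eK_ne[OF v N2 k(2)] pQ unfolding Rf_def by simp
      qed
    qed
  next
    assume na: "\<not> adj CARD('n) p q"
    have "?P \<noteq> ?Q" using sucmod_inj[OF k(1) k(2)] k(3) by blast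
    have d: "e p \<noteq> e q" "e p \<noteq> e ?Q" "e ?P \<noteq> e q" "e ?P \<noteq> e ?Q"
      using valid_inj[OF v k(1) k(2)] valid_inj[OF v k(1) PQ(2)] valid_inj[OF v PQ(1) k(2)]
        valid_inj[OF v PQ(1) PQ(2)] na k(3) \<open>?P \<noteq> ?Q\<close> by auto
    show "Rf e c p \<circ> Rf e c q = Rf e c q \<circ> Rf e c p"
      unfolding Rf_def by (rule refl_comm_disj) (use d eK_ne[OF v N2 k(1)] eK_ne[OF v N2 k(2)] in auto)
  qed
qed

lemma valid_of_inj:
  fixes e :: "nat \<Rightarrow> 'n::finite"
  assumes "inj_on e {..<CARD('n)}"
  shows "valid e"
proof -
  have "e ` {..<CARD('n)} = UNIV"
    by (rule card_subset_eq) (use assms in \<open>auto simp: card_image\<close>)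
  then show ?thesis using assms unfolding valid_def bij_betw_def by simp
qed

lemma sucmod_zero: "k < N \<Longrightarrow> Suc k mod N = 0 \<longleftrightarrow> k = N - 1"
proof -
  assume k: "k < N"
  show ?thesis
  proof (cases "Suc k < N")
    case True
    then have "Suc k mod N = Suc k" by (rule mod_less)
    then show ?thesis using True by linarith
  next
    case False
    then have "Suc k = N" using k by linarith
    then show ?thesis by (metis diff_Suc_1 mod_self)
  qed
qed

definition rot :: "(nat \<Rightarrow> 'n::finite) \<Rightarrow> nat \<Rightarrow> 'n" where
  "rot e k = e (Suc k mod CARD('n))"

definition rc :: "(nat \<Rightarrow> 'n::finite) \<Rightarrow> ('n \<Rightarrow> int) \<Rightarrow> 'n \<Rightarrow> int" where
  "rc e c i = c i + (if i = e 0 then 1 else 0)"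

lemma valid_rot:
  fixes e :: "nat \<Rightarrow> 'n::finite"
  assumes v: "valid e"
  shows "valid (rot e)"
proof (rule valid_of_inj, rule inj_onI)
  fix x y assume xy: "x \<in> {..<CARD('n)}" "y \<in> {..<CARD('n)}" "rot e x = rot e y"
  have "Suc x mod CARD('n) = Suc y mod CARD('n)"
    using valid_inj[OF v, of "Suc x mod CARD('n)" "Suc y mod CARD('n)"] xy by (simp add: rot_def)
  then show "x = y" using sucmod_inj xy by simp
qed

lemma rot_Rf:
  fixes e :: "nat \<Rightarrow> 'n::finite"
  assumes v: "valid e" and k: "k < CARD('n)"
  shows "Rf (rot e) (rc e c) k = Rf e c (Suc k mod CARD('n))"
proof -
  define K where "K = Suc k mod CARD('n)"
  define K2 where "K2 = Suc K mod CARD('n)"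
  have KN: "K < CARD('n)" "K2 < CARD('n)" unfolding K_def K2_def by auto
  have z0: "0 < CARD('n)" by simp
  have a: "e K = e 0 \<longleftrightarrow> k = CARD('n) - 1"
    using valid_inj[OF v KN(1) z0] sucmod_zero[OF k] unfolding K_def by simp
  have b: "e K2 = e 0 \<longleftrightarrow> K = CARD('n) - 1"
    using valid_inj[OF v KN(2) z0] sucmod_zero[OF KN(1)] unfolding K2_def by simp
  have "ddc (rot e) (rc e c) k = ddc e c K"
    unfolding ddc_def rot_def rc_def K_def[symmetric] K2_def[symmetric] using a b by simp
  then show ?thesis unfolding Rf_def by (simp add: rot_def K_def[symmetric] K2_def[symmetric])
qed

lemma rotn:
  fixes e :: "nat \<Rightarrow> 'n::finite"
  assumes v: "valid e"
  shows "\<exists>e' c'. valid e' \<and> (\<forall>k<CARD('n). Rf e' c' k = Rf e c ((k + m) mod CARD('n)))"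
proof (induction m)
  case 0 then show ?case using v by auto
next
  case (Suc m)
  then obtain e' c' where v': "valid e'" and r: "\<forall>k<CARD('n). Rf e' c' k = Rf e c ((k + m) mod CARD('n))" by blast
  have "\<forall>k<CARD('n). Rf (rot e') (rc e' c') k = Rf e c ((k + Suc m) mod CARD('n))"
  proof (intro allI impI)
    fix k assume k: "k < CARD('n)"
    have "Rf (rot e') (rc e' c') k = Rf e' c' (Suc k mod CARD('n))" by (rule rot_Rf[OF v' k])
    also have "\<dots> = Rf e c ((Suc k mod CARD('n) + m) mod CARD('n))" using r by simp
    also have "(Suc k mod CARD('n) + m) mod CARD('n) = (k + Suc m) mod CARD('n)"
      by (simp add: mod_add_left_eq)
    finally show "Rf (rot e') (rc e' c') k = Rf e c ((k + Suc m) mod CARD('n))" .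
  qed
  then show ?case using valid_rot[OF v'] by blast
qed

lemma flip0:
  fixes e :: "nat \<Rightarrow> 'n::finite"
  assumes v: "valid e" and N: "3 \<le> CARD('n)"
  shows "\<exists>e'. valid e' \<and> Rf e' c 0 = Rf e c 0 \<and>
     (\<forall>k<CARD('n). k \<noteq> 0 \<longrightarrow> Rf e' c k = Rf e c 0 \<circ> Rf e c k \<circ> Rf e c 0)"
proof -
  define sw where "sw = Transposition.transpose (0::nat) 1"
  define e' where "e' = e \<circ> sw"
  have swN: "j < CARD('n) \<Longrightarrow> sw j < CARD('n)" for j using N
    by (auto simp: sw_def Transposition.transpose_def)
  have v': "valid e'"
  proof (rule valid_of_inj, rule inj_onI)
    fix x y assume "x \<in> {..<CARD('n)}" "y \<in> {..<CARD('n)}" "e' x = e' y"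
    then have "sw x = sw y" using valid_inj[OF v, of "sw x" "sw y"] swN by (simp add: e'_def)
    then show "x = y" by (auto simp: sw_def Transposition.transpose_def split: if_splits)
  qed
  have N1: "0 < CARD('n)" "1 < CARD('n)" "2 < CARD('n)" using N by auto
  have s01: "Suc 0 mod CARD('n) = 1" using N1 by simp
  have n0: "(0::nat) \<noteq> CARD('n) - 1" using N by simp
  have e01: "e 0 \<noteq> e 1" using valid_inj[OF v N1(1) N1(2)] by simp
  define \<tau> where "\<tau> = Transposition.transpose (e 0) (e 1)"
  have tau: "\<tau> (e j) = e (sw j)" if j: "j < CARD('n)" for j
  proof -
    have "e j = e 0 \<longleftrightarrow> j = 0" using valid_inj[OF v j N1(1)] by simp
    moreover have "e j = e 1 \<longleftrightarrow> j = 1" using valid_inj[OF v j N1(2)] by simp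
    ultimately show ?thesis by (auto simp: \<tau>_def sw_def Transposition.transpose_def)
  qed
  define d where "d = ddc e c 0"
  have d: "d = c (e 0) - c (e 1)" unfolding d_def ddc_def using s01 n0 by simp
  have R0: "Rf e c 0 = refl (e 0) (e 1) d" unfolding Rf_def d_def using s01 by simp
  have "Rf e' c 0 = Rf e c 0"
  proof -
    have "Rf e' c 0 = refl (e 1) (e 0) (c (e 1) - c (e 0))"
      unfolding Rf_def ddc_def using s01 n0 by (simp add: e'_def sw_def)
    also have "\<dots> = refl (e 0) (e 1) d" using refl_swap[of "e 1" "e 0" d] d by simp
    finally show ?thesis using R0 by simp
  qed
  moreover have "Rf e' c k = Rf e c 0 \<circ> Rf e c k \<circ> Rf e c 0" if k: "k < CARD('n)" "k \<noteq> 0" for k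
  proof -
    define K where "K = Suc k mod CARD('n)"
    have KN: "K < CARD('n)" unfolding K_def by simp
    have K1: "K \<noteq> 1" using sucmod_inj[OF k(1) N1(1)] k(2) s01 unfolding K_def by auto
    have K0: "K = 0 \<longleftrightarrow> k = CARD('n) - 1" using sucmod_zero[OF k(1)] unfolding K_def by simp
    have ekK: "e k \<noteq> e K" using eK_ne[OF v _ k(1)] N unfolding K_def by simp
    have dk: "(if e k = e 0 then 1 else if e k = e 1 then -1 else 0) = (if k = 1 then -1 else (0::int))"
      using valid_inj[OF v k(1) N1(1)] valid_inj[OF v k(1) N1(2)] k(2) by simp
    have dK: "(if e K = e 0 then 1 else if e K = e 1 then -1 else 0) = (if k = CARD('n) - 1 then 1 else (0::int))"
      using valid_inj[OF v KN N1(1)] valid_inj[OF v KN N1(2)] K0 K1 by simp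
    have conj: "Rf e c 0 \<circ> Rf e c k \<circ> Rf e c 0 =
       refl (\<tau> (e k)) (\<tau> (e K)) (ddc e c k - d * ((if k = 1 then -1 else 0) - (if k = CARD('n) - 1 then 1 else 0)))"
      unfolding R0 unfolding Rf_def K_def[symmetric]
      using refl_conj[OF e01 ekK, of d "ddc e c k"] dk dK by (auto simp: fun_eq_iff \<tau>_def)
    have lhs: "Rf e' c k = refl (e (sw k)) (e (sw K)) (c (e (sw k)) - c (e (sw K)) - (if k = CARD('n) - 1 then 1 else 0))"
      unfolding Rf_def ddc_def K_def[symmetric] by (simp add: e'_def)
    have "c (e (sw k)) - c (e (sw K)) - (if k = CARD('n) - 1 then 1 else 0) =
          ddc e c k - d * ((if k = 1 then -1 else 0) - (if k = CARD('n) - 1 then 1 else 0))"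
    proof (cases "k = 1")
      case True
      then have "k \<noteq> CARD('n) - 1" "K = 2" using N unfolding K_def by auto
      then show ?thesis using True d unfolding ddc_def K_def[symmetric] by (simp add: sw_def)
    next
      case False
      note k1 = False
      show ?thesis
      proof (cases "k = CARD('n) - 1")
        case True
        then have "K = 0" using K0 by simp
        moreover have "sw k = k" using k1 k(2) by (simp add: sw_def)
        ultimately show ?thesis using True d k1 unfolding ddc_def K_def[symmetric] by (simp add: sw_def)
      next
        case False
        then have "K \<noteq> 0" using K0 by simp
        then have "sw K = K" "sw k = k" using K1 k1 k(2) by (auto simp: sw_def)
        then show ?thesis using False k1 unfolding ddc_def K_def[symmetric] by simp
      qed
    qed
    then show ?thesis using lhs conj tau[OF k(1)] tau[OF KN] by simp
  qed
  ultimately show ?thesis using v' by blast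
qed

lemma flip_at:
  fixes e :: "nat \<Rightarrow> 'n::finite"
  assumes v: "valid e" and N: "3 \<le> CARD('n)" and x: "x < CARD('n)"
  shows "\<exists>e' c'. valid e' \<and> Rf e' c' x = Rf e c x \<and>
     (\<forall>k<CARD('n). k \<noteq> x \<longrightarrow> Rf e' c' k = Rf e c x \<circ> Rf e c k \<circ> Rf e c x)"
proof -
  obtain e1 c1 where v1: "valid e1" and r1: "\<forall>k<CARD('n). Rf e1 c1 k = Rf e c ((k + x) mod CARD('n))"
    using rotn[OF v] by blast
  obtain e2 where v2: "valid e2" and r20: "Rf e2 c1 0 = Rf e1 c1 0"
    and r2: "\<forall>k<CARD('n). k \<noteq> 0 \<longrightarrow> Rf e2 c1 k = Rf e1 c1 0 \<circ> Rf e1 c1 k \<circ> Rf e1 c1 0"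
    using flip0[OF v1 N] by blast
  obtain e3 c3 where v3: "valid e3" and r3: "\<forall>k<CARD('n). Rf e3 c3 k = Rf e2 c1 ((k + (CARD('n) - x)) mod CARD('n))"
    using rotn[OF v2] by blast
  have N0: "0 < CARD('n)" by simp
  have s: "Rf e1 c1 0 = Rf e c x" using r1 N0 x by simp
  have "Rf e3 c3 x = Rf e c x"
  proof -
    have "(x + (CARD('n) - x)) mod CARD('n) = 0" using x by simp
    then show ?thesis using r3 x r20 s by simp
  qed
  moreover have "Rf e3 c3 k = Rf e c x \<circ> Rf e c k \<circ> Rf e c x" if k: "k < CARD('n)" "k \<noteq> x" for k
  proof -
    define j where "j = (k + (CARD('n) - x)) mod CARD('n)"
    have jN: "j < CARD('n)" unfolding j_def by simp
    have jx: "(j + x) mod CARD('n) = k"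
    proof -
      have "(j + x) mod CARD('n) = (k + (CARD('n) - x) + x) mod CARD('n)" unfolding j_def by (simp add: mod_add_left_eq)
      also have "k + (CARD('n) - x) + x = k + CARD('n)" using x by simp
      finally show ?thesis using k by simp
    qed
    have j0: "j \<noteq> 0"
    proof
      assume "j = 0"
      then show False using jx k x by simp
    qed
    have "Rf e3 c3 k = Rf e2 c1 j" using r3 k unfolding j_def by simp
    also have "\<dots> = Rf e1 c1 0 \<circ> Rf e1 c1 j \<circ> Rf e1 c1 0" using r2 jN j0 by simp
    also have "Rf e1 c1 j = Rf e c k" using r1 jN jx by simp
    finally show ?thesis using s by (simp add: comp_def)
  qed
  ultimately show ?thesis using v3 by blast
qed

lemma cprod_Nil[simp]: "cprod [] = id" by (simp add: cprod_def)
lemma cprod_Cons[simp]: "cprod (f # xs) = f \<circ> cprod xs" by (simp add: cprod_def)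
lemma cprod_append: "cprod (xs @ ys) = cprod xs \<circ> cprod ys"
  by (induction xs) (auto simp: comp_assoc)

lemma comm_front:
  assumes "\<forall>a\<in>set A. f a \<circ> f k = f k \<circ> f a"
  shows "cprod (map f (A @ k # B)) = cprod (map f (k # A @ B))"
  using assms
proof (induction A)
  case Nil then show ?case by simp
next
  case (Cons a A)
  have IH: "cprod (map f (A @ k # B)) = cprod (map f (k # A @ B))" using Cons by (simp add: comp_def)
  have ak: "f a \<circ> f k = f k \<circ> f a" using Cons.prems by (metis list.set_intros(1))
  have c: "f a (f k y) = f k (f a y)" for y using fun_cong[OF ak, of y] by simp
  show ?case
  proof
    fix y
    have "cprod (map f ((a # A) @ k # B)) y = f a (cprod (map f (A @ k # B)) y)" by simp
    also have "\<dots> = f a (f k (cprod (map f (A @ B)) y))" using IH by simp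
    also have "\<dots> = f k (f a (cprod (map f (A @ B)) y))" using c by simp
    finally show "cprod (map f ((a # A) @ k # B)) y = cprod (map f (k # (a # A) @ B)) y" by simp
  qed
qed

lemma conj_cprod:
  assumes ss: "\<And>y. s (s y) = y"
  shows "cprod (map (\<lambda>j. s \<circ> g j \<circ> s) xs) = s \<circ> cprod (map g xs) \<circ> s"
proof (induction xs)
  case Nil then show ?case using ss by (auto simp: fun_eq_iff)
next
  case (Cons x xs)
  then show ?case using ss by (auto simp: fun_eq_iff)
qed

definition ipos :: "nat list \<Rightarrow> nat \<Rightarrow> nat" where
  "ipos L x = length (takeWhile (\<lambda>y. y \<noteq> x) L)"

lemma ipos_append: "ipos (xs @ ys) x = (if x \<in> set xs then ipos xs x else length xs + ipos ys x)"
  unfolding ipos_def by (auto simp: takeWhile_append)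

lemma ipos_Cons: "ipos (y # ys) x = (if y = x then 0 else Suc (ipos ys x))"
  unfolding ipos_def by auto

lemma ipos_less: "x \<in> set L \<Longrightarrow> ipos L x < length L"
  by (induction L) (auto simp: ipos_Cons)

lemma ipos_nth: "x \<in> set L \<Longrightarrow> L ! ipos L x = x"
  unfolding ipos_def using nth_length_takeWhile[of "\<lambda>y. y \<noteq> x" L] ipos_less[of x L, unfolded ipos_def] by auto

lemma ipos_of_nth: "distinct L \<Longrightarrow> a < length L \<Longrightarrow> ipos L (L ! a) = a"
  using ipos_nth[of "L ! a" L] ipos_less[of "L ! a" L] nth_eq_iff_index_eq by auto

lemma ipos_inj: "x \<in> set L \<Longrightarrow> y \<in> set L \<Longrightarrow> ipos L x = ipos L y \<Longrightarrow> x = y"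
  using ipos_nth by metis

definition before :: "nat list \<Rightarrow> nat \<Rightarrow> nat \<Rightarrow> bool" where
  "before L p q \<longleftrightarrow> p \<in> set L \<and> q \<in> set L \<and> ipos L p < ipos L q"

lemma before_asym: "before L p q \<Longrightarrow> \<not> before L q p"
  unfolding before_def by auto

lemma before_trans: "before L p q \<Longrightarrow> before L q r \<Longrightarrow> before L p r"
  unfolding before_def by auto

lemma before_total: "p \<in> set L \<Longrightarrow> q \<in> set L \<Longrightarrow> p \<noteq> q \<Longrightarrow> before L p q \<or> before L q p"
  unfolding before_def using ipos_inj by (metis linorder_neqE_nat)

lemma before_move:
  assumes d: "distinct (A @ k # B)"
  shows "before (A @ B @ [k]) p q \<longleftrightarrow>
     (if q = k then p \<in> set A \<or> p \<in> set B else if p = k then False else before (A @ k # B) p q)"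
proof -
  have a: "\<And>x. x \<in> set A \<Longrightarrow> ipos A x < length A" and b: "\<And>x. x \<in> set B \<Longrightarrow> ipos B x < length B"
    by (auto intro: ipos_less)
  show ?thesis using d unfolding before_def
    apply (auto simp: ipos_append ipos_Cons)
    apply (force dest: a b)+
    done
qed

definition mu :: "nat \<Rightarrow> nat list \<Rightarrow> nat" where
  "mu N L = (\<Sum>j<N. if before L j (Suc j mod N) then j else 0)"

lemma before_front:
  assumes "distinct (A @ k # B)" "a \<in> set A"
  shows "before (A @ k # B) a k"
  using assms ipos_less[of a A] unfolding before_def by (auto simp: ipos_append ipos_Cons)

lemma Rf_invol:
  fixes e :: "nat \<Rightarrow> 'n::finite"
  assumes v: "valid e" and N: "2 \<le> CARD('n)" and k: "k < CARD('n)"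
  shows "Rf e c k (Rf e c k y) = y"
  unfolding Rf_def using refl_invol[OF eK_ne[OF v N k]] by simp

lemma step:
  fixes e :: "nat \<Rightarrow> 'n::finite"
  assumes N: "3 \<le> CARD('n)" and v: "valid e" and d: "distinct L" and sL: "set L = {..<CARD('n)}"
    and k: "1 \<le> k" "k < CARD('n)" "\<not> before L (k - 1) k" "before L k (Suc k mod CARD('n))"
  shows "\<exists>L' e' c'. valid e' \<and> distinct L' \<and> set L' = {..<CARD('n)} \<and>
     cprod (map (Rf e c) L) = cprod (map (Rf e' c') L') \<and> mu CARD('n) L' < mu CARD('n) L"
proof -
  let ?N = "CARD('n)"
  have N2: "2 \<le> ?N" using N by simp
  have kL: "k \<in> set L" using k sL by auto
  obtain A B where L: "L = A @ k # B" using split_list[OF kL] by blast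
  have dAB: "distinct (A @ k # B)" using d L by simp
  have km: "k - 1 < ?N" "k - 1 \<noteq> k" "Suc (k - 1) mod ?N = k" using k by auto
  have bkm: "before L k (k - 1)" using before_total[of k L "k - 1"] k km sL by auto
  have comm: "\<forall>a\<in>set A. Rf e c a \<circ> Rf e c k = Rf e c k \<circ> Rf e c a"
  proof
    fix a assume a: "a \<in> set A"
    have ba: "before L a k" using before_front[OF dAB a] L by simp
    have aN: "a < ?N" using a sL L by auto
    have "a \<noteq> k" using dAB a by auto
    moreover have "a \<noteq> Suc k mod ?N" using ba k(4) before_asym by blast
    moreover have "k \<noteq> Suc a mod ?N"
    proof
      assume "k = Suc a mod ?N"
      then have "a = k - 1" using sucmod_inj[OF aN km(1)] km(3) by simp
      then show False using ba bkm before_asym by blast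
    qed
    ultimately show "Rf e c a \<circ> Rf e c k = Rf e c k \<circ> Rf e c a"
      using Rf_comm_iff[OF v N aN k(2)] by blast
  qed
  have c1: "cprod (map (Rf e c) L) = cprod (map (Rf e c) (k # A @ B))"
    unfolding L by (rule comm_front[OF comm])
  obtain e' c' where v': "valid e'" and r0: "Rf e' c' k = Rf e c k"
    and r: "\<forall>j<?N. j \<noteq> k \<longrightarrow> Rf e' c' j = Rf e c k \<circ> Rf e c j \<circ> Rf e c k"
    using flip_at[OF v N k(2)] by blast
  let ?s = "Rf e c k"
  have inv: "\<And>y. ?s (?s y) = y" using Rf_invol[OF v N2 k(2)] .
  have mapAB: "map (Rf e' c') (A @ B) = map (\<lambda>j. ?s \<circ> Rf e c j \<circ> ?s) (A @ B)"
  proof (rule map_cong[OF refl])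
    fix j assume j: "j \<in> set (A @ B)"
    then have "j < ?N" "j \<noteq> k" using sL L dAB by auto
    then show "Rf e' c' j = ?s \<circ> Rf e c j \<circ> ?s" using r by simp
  qed
  have "cprod (map (Rf e' c') (A @ B @ [k])) = cprod (map (Rf e' c') (A @ B)) \<circ> ?s"
  proof -
    have "map (Rf e' c') (A @ B @ [k]) = map (Rf e' c') (A @ B) @ [?s]" using r0 by simp
    then show ?thesis by (simp only: cprod_append) simp
  qed
  also have "\<dots> = (?s \<circ> cprod (map (Rf e c) (A @ B)) \<circ> ?s) \<circ> ?s"
    unfolding mapAB conj_cprod[OF inv] ..
  also have "\<dots> = cprod (map (Rf e c) (k # A @ B))" using inv by (simp add: fun_eq_iff)
  finally have c2: "cprod (map (Rf e c) L) = cprod (map (Rf e' c') (A @ B @ [k]))" using c1 by simp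
  let ?L' = "A @ B @ [k]"
  have d': "distinct ?L'" using dAB by auto
  have s': "set ?L' = {..<?N}" using sL L by auto
  define f where "f j = (if before L j (Suc j mod ?N) then j else 0)" for j
  define f' where "f' j = (if before ?L' j (Suc j mod ?N) then j else 0)" for j
  have skk: "Suc k mod ?N \<noteq> k" using sucmod_ne[OF N2 k(2)] .
  have fk: "f k = k" "f' k = 0" unfolding f_def f'_def using k(4) skk
    by (auto simp: before_move[OF dAB] L)
  have km1: "k - 1 \<in> set A \<or> k - 1 \<in> set B" using km sL L by auto
  have fkm: "f (k - 1) = 0" "f' (k - 1) = k - 1" unfolding f_def f'_def using k(3) km km1
    by (auto simp: before_move[OF dAB])
  have frest: "f' j = f j" if j: "j \<in> {..<?N} - {k} - {k - 1}" for j
  proof -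
    have jN: "j < ?N" "j \<noteq> k" "j \<noteq> k - 1" using j by auto
    have "Suc j mod ?N \<noteq> k"
    proof
      assume "Suc j mod ?N = k"
      then have "j = k - 1" using sucmod_inj[OF jN(1) km(1)] km(3) by simp
      then show False using jN by simp
    qed
    then show ?thesis unfolding f_def f'_def using jN by (simp add: before_move[OF dAB] L)
  qed
  have sumf: "sum g {..<?N} = g k + g (k - 1) + sum g ({..<?N} - {k} - {k - 1})" for g :: "nat \<Rightarrow> nat"
  proof -
    have "sum g {..<?N} = g k + sum g ({..<?N} - {k})" using k by (simp add: sum.remove)
    also have "sum g ({..<?N} - {k}) = g (k - 1) + sum g ({..<?N} - {k} - {k - 1})"
      using km by (simp add: sum.remove)
    finally show ?thesis by simp
  qed
  have "mu ?N ?L' = sum f' {..<?N}" unfolding mu_def f'_def ..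
  also have "\<dots> = 0 + (k - 1) + sum f ({..<?N} - {k} - {k - 1})"
    using sumf[of f'] fk fkm frest by simp
  also have "\<dots> < k + 0 + sum f ({..<?N} - {k} - {k - 1})" using k by simp
  also have "\<dots> = sum f {..<?N}" using sumf[of f] fk fkm by simp
  also have "\<dots> = mu ?N L" unfolding mu_def f_def ..
  finally have "mu ?N ?L' < mu ?N L" .
  then show ?thesis using v' d' s' c2 by blast
qed

lemma reach:
  fixes e :: "nat \<Rightarrow> 'n::finite"
  assumes N: "3 \<le> CARD('n)"
  shows "valid e \<Longrightarrow> distinct L \<Longrightarrow> set L = {..<CARD('n)} \<Longrightarrow>
    \<exists>L' (e'::nat \<Rightarrow> 'n) c'. valid e' \<and> distinct L' \<and> set L' = {..<CARD('n)} \<and>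
      cprod (map (Rf e c) L) = cprod (map (Rf e' c') L') \<and>
      (\<forall>k. 1 \<le> k \<longrightarrow> k < CARD('n) \<longrightarrow> before L' (k - 1) k \<or> \<not> before L' k (Suc k mod CARD('n)))"
proof (induction "mu CARD('n) L" arbitrary: L e c rule: less_induct)
  case less
  show ?case
  proof (cases "\<forall>k. 1 \<le> k \<longrightarrow> k < CARD('n) \<longrightarrow> before L (k - 1) k \<or> \<not> before L k (Suc k mod CARD('n))")
    case True then show ?thesis using less.prems by blast
  next
    case False
    then obtain k where k: "1 \<le> k" "k < CARD('n)" "\<not> before L (k - 1) k" "before L k (Suc k mod CARD('n))"
      by blast
    obtain L1 e1 c1 where s: "valid e1" "distinct L1" "set L1 = {..<CARD('n)}"
      "cprod (map (Rf e c) L) = cprod (map (Rf e1 c1) L1)" "mu CARD('n) L1 < mu CARD('n) L"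
      using step[OF N less.prems k] by blast
    from less.hyps[OF s(5) s(1) s(2) s(3)] s(4) show ?thesis by metis
  qed
qed

lemma final_bigon:
  fixes e :: "nat \<Rightarrow> 'n::finite"
  assumes N: "3 \<le> CARD('n)" and v: "valid e" and d: "distinct L" and sL: "set L = {..<CARD('n)}"
    and anti: "\<forall>k. 1 \<le> k \<longrightarrow> k < CARD('n) \<longrightarrow> before L (k - 1) k \<or> \<not> before L k (Suc k mod CARD('n))"
  shows "bigon_coxeter_element (Alc e c) (cprod (map (Rf e c) L))"
proof -
  let ?N = "CARD('n)"
  define R where "R = Rf e c"
  define ob where "ob k = before L k (Suc k mod ?N)" for k
  have N2: "2 \<le> ?N" using N by simp
  have N0: "0 < ?N" by simp
  have fr: "facet_refls (Alc e c) = R ` {..<?N}" unfolding R_def using facet_refls_Alc[OF v N] .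
  have Rinj: "\<And>p q. p < ?N \<Longrightarrow> q < ?N \<Longrightarrow> R p = R q \<Longrightarrow> p = q" unfolding R_def using Rf_inj[OF v N] by blast
  have inL: "\<And>p. p < ?N \<Longrightarrow> p \<in> set L" using sL by auto
  have tot: "\<And>p q. p < ?N \<Longrightarrow> q < ?N \<Longrightarrow> p \<noteq> q \<Longrightarrow> before L p q \<or> before L q p"
    using before_total inL by blast
  have s1: "Suc 0 mod ?N = 1" using N by simp
  have sN: "Suc (?N - 1) mod ?N = 0" using N by simp
  have sm: "\<And>k. 1 \<le> k \<Longrightarrow> k < ?N \<Longrightarrow> Suc (k - 1) mod ?N = k" by simp
  have propg: "ob b \<longrightarrow> ob a" if "a \<le> b" "b < ?N" for a b
    using that
  proof (induction b)
    case 0 then show ?case by simp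
  next
    case (Suc b)
    show ?case
    proof (cases "a = Suc b")
      case True then show ?thesis by simp
    next
      case False
      then have "a \<le> b" using Suc by simp
      have "ob (Suc b) \<longrightarrow> ob b" using anti[rule_format, of "Suc b"] Suc.prems unfolding ob_def by auto
      then show ?thesis using Suc.IH[OF \<open>a \<le> b\<close>] Suc.prems by simp
    qed
  qed
  have ob0: "ob 0"
  proof (rule ccontr)
    assume n0: "\<not> ob 0"
    have nob: "\<not> ob j" if "j < ?N" for j using propg[of 0 j] that n0 by auto
    have bk: "before L (Suc j mod ?N) j" if "j < ?N" for j
    proof -
      have "Suc j mod ?N \<noteq> j" using sucmod_ne[OF N2 that] .
      then show ?thesis using tot[of j "Suc j mod ?N"] nob[OF that] that unfolding ob_def by auto
    qed
    have chain: "before L m 0" if "1 \<le> m" "m < ?N" for m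
      using that
    proof (induction m)
      case 0 then show ?case by simp
    next
      case (Suc m)
      show ?case
      proof (cases "m = 0")
        case True then show ?thesis using bk[of 0] s1 N by simp
      next
        case False
        have sm1: "Suc m mod ?N = Suc m" using Suc.prems by (intro mod_less) simp
        have m1: "m < ?N" using Suc.prems by simp
        have "before L (Suc m) m" using bk[OF m1] sm1 by simp
        moreover have "before L m 0" using Suc.IH False Suc.prems by simp
        ultimately show ?thesis by (rule before_trans)
      qed
    qed
    have "before L (?N - 1) 0" using chain[of "?N - 1"] N by simp
    moreover have "before L 0 (?N - 1)" using bk[of "?N - 1"] sN by simp
    ultimately show False using before_asym by blast
  qed
  have obN: "\<not> ob (?N - 1)"
  proof
    assume a: "ob (?N - 1)"
    have allob: "ob j" if "j < ?N" for j using propg[of j "?N - 1"] that a by auto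
    have chain: "before L 0 m" if "1 \<le> m" "m < ?N" for m
      using that
    proof (induction m)
      case 0 then show ?case by simp
    next
      case (Suc m)
      show ?case
      proof (cases "m = 0")
        case True then show ?thesis using allob[of 0] s1 N unfolding ob_def by simp
      next
        case False
        have sm1: "Suc m mod ?N = Suc m" using Suc.prems by (intro mod_less) simp
        have m1: "m < ?N" using Suc.prems by simp
        have "before L m (Suc m)" using allob[OF m1] sm1 unfolding ob_def by simp
        moreover have "before L 0 m" using Suc.IH False Suc.prems by simp
        ultimately show ?thesis using before_trans by blast
      qed
    qed
    have "before L 0 (?N - 1)" using chain[of "?N - 1"] N by simp
    moreover have "before L (?N - 1) 0" using a sN unfolding ob_def by simp
    ultimately show False using before_asym by blast
  qed
  define Ori where "Ori = {(R p, R q) | p q. p < ?N \<and> q < ?N \<and> adj ?N p q \<and> before L p q}"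
  have OriI: "(R p, R q) \<in> Ori \<longleftrightarrow> adj ?N p q \<and> before L p q" if "p < ?N" "q < ?N" for p q
  proof
    assume "(R p, R q) \<in> Ori"
    then obtain p' q' where pq': "R p = R p'" "R q = R q'" "p' < ?N" "q' < ?N" "adj ?N p' q'" "before L p' q'"
      unfolding Ori_def by blast
    have "p = p'" using Rinj[OF that(1) pq'(3) pq'(1)] .
    moreover have "q = q'" using Rinj[OF that(2) pq'(4) pq'(2)] .
    ultimately show "adj ?N p q \<and> before L p q" using pq' by simp
  next
    assume "adj ?N p q \<and> before L p q"
    then show "(R p, R q) \<in> Ori" unfolding Ori_def using that by blast
  qed
  have OriE: "\<exists>p q. p < ?N \<and> q < ?N \<and> s = R p \<and> t = R q \<and> adj ?N p q \<and> before L p q" if "(s, t) \<in> Ori" for s t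
    using that unfolding Ori_def by blast
  have adj_ne: "p \<noteq> q" if "adj ?N p q" "p < ?N" "q < ?N" for p q
    using that sucmod_ne[OF N2 that(2)] sucmod_ne[OF N2 that(3)] by auto
  have dedge_iff: "dedge (Alc e c) s t \<longleftrightarrow> (\<exists>p q. p < ?N \<and> q < ?N \<and> adj ?N p q \<and> s = R p \<and> t = R q)" for s t
  proof
    assume de: "dedge (Alc e c) s t"
    then obtain p q where pq: "p < ?N" "q < ?N" "s = R p" "t = R q" unfolding dedge_def fr by blast
    have "p \<noteq> q" using de pq unfolding dedge_def by auto
    moreover have "s \<circ> t \<noteq> t \<circ> s" using de unfolding dedge_def by auto
    ultimately have "adj ?N p q" using Rf_comm_iff[OF v N pq(1) pq(2)] pq unfolding R_def by blast
    then show "\<exists>p q. p < ?N \<and> q < ?N \<and> adj ?N p q \<and> s = R p \<and> t = R q" using pq by blast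
  next
    assume "\<exists>p q. p < ?N \<and> q < ?N \<and> adj ?N p q \<and> s = R p \<and> t = R q"
    then obtain p q where pq: "p < ?N" "q < ?N" "adj ?N p q" "s = R p" "t = R q" by blast
    have pq': "p \<noteq> q" using adj_ne pq by blast
    have "s \<noteq> t" using Rinj pq pq' by blast
    moreover have "s \<circ> t \<noteq> t \<circ> s" using Rf_comm_iff[OF v N pq(1) pq(2) pq'] pq unfolding R_def by blast
    moreover have "s \<in> facet_refls (Alc e c)" "t \<in> facet_refls (Alc e c)" using pq fr by auto
    ultimately show "dedge (Alc e c) s t" unfolding dedge_def by blast
  qed
  have acyc: "acyclic_orientation (Alc e c) Ori"
    unfolding acyclic_orientation_def
  proof (intro conjI allI impI)
    show "Ori \<subseteq> {(s, t). dedge (Alc e c) s t}"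
    proof
      fix x assume "x \<in> Ori"
      then obtain s t where x: "x = (s, t)" "(s, t) \<in> Ori" by (cases x) auto
      obtain p q where "p < ?N \<and> q < ?N \<and> s = R p \<and> t = R q \<and> adj ?N p q \<and> before L p q"
        using OriE[OF x(2)] by blast
      then have "dedge (Alc e c) s t" by (intro iffD2[OF dedge_iff]) blast
      then show "x \<in> {(s, t). dedge (Alc e c) s t}" using x by simp
    qed
  next
    fix s t assume "dedge (Alc e c) s t"
    then obtain p q where pq: "p < ?N" "q < ?N" "adj ?N p q" "s = R p" "t = R q" using dedge_iff by blast
    have "p \<noteq> q" using adj_ne pq by blast
    have adj2: "adj ?N q p" using pq by blast
    show "(s, t) \<in> Ori \<longleftrightarrow> (t, s) \<notin> Ori"
      using OriI[OF pq(1) pq(2)] OriI[OF pq(2) pq(1)] pq adj2 tot[OF pq(1) pq(2) \<open>p \<noteq> q\<close>] before_asym by blast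
  next
    define m where "m s = ipos L (inv_into {..<?N} R s)" for s
    have injR: "inj_on R {..<?N}" using Rinj by (auto intro: inj_onI)
    have "Ori \<subseteq> inv_image less_than m"
    proof
      fix x assume "x \<in> Ori"
      then obtain p q where pq: "p < ?N" "q < ?N" "x = (R p, R q)" "before L p q" using OriE by (cases x) blast
      have "m (R p) = ipos L p" "m (R q) = ipos L q" unfolding m_def using injR pq by (auto simp: inv_into_f_f)
      then show "x \<in> inv_image less_than m" using pq by (simp add: before_def)
    qed
    moreover have "acyclic (inv_image less_than m)" by (rule wf_acyclic, rule wf_inv_image, rule wf_less_than)
    ultimately show "acyclic Ori" using acyclic_subset by blast
  qed
  have src: "\<exists>!s. is_source (Alc e c) Ori s"
  proof
    show "is_source (Alc e c) Ori (R 0)"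
      unfolding is_source_def
    proof (intro conjI allI)
      show "R 0 \<in> facet_refls (Alc e c)" using fr N0 by auto
      fix t show "(t, R 0) \<notin> Ori"
      proof
        assume "(t, R 0) \<in> Ori"
        then obtain p q where pq: "p < ?N" "q < ?N" "t = R p" "R 0 = R q" "adj ?N p q" "before L p q" using OriE by blast
        have "q = 0" using Rinj[OF N0 pq(2) pq(4)] by simp
        then consider "p = ?N - 1" | "p = 1" using pq sucmod_zero[of p ?N] s1 by auto
        then show False
        proof cases
          case 1 then show False using obN pq \<open>q = 0\<close> sN unfolding ob_def by simp
        next
          case 2 then show False using ob0 pq \<open>q = 0\<close> s1 before_asym unfolding ob_def by auto
        qed
      qed
    qed
  next
    fix s assume so: "is_source (Alc e c) Ori s"
    then obtain q where q: "q < ?N" "s = R q" unfolding is_source_def fr by blast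
    show "s = R 0"
    proof (rule ccontr)
      assume "s \<noteq> R 0"
      then have q1: "1 \<le> q" using q by (cases q) auto
      have "(R (q - 1), R q) \<notin> Ori" using so q unfolding is_source_def by blast
      then have "\<not> before L (q - 1) q" using OriI[of "q - 1" q] q q1 sm[OF q1 q(1)] by auto
      then have "\<not> before L q (Suc q mod ?N)" using anti[rule_format, OF q1 q(1)] by blast
      moreover have "Suc q mod ?N \<noteq> q" using sucmod_ne[OF N2 q(1)] .
      ultimately have "before L (Suc q mod ?N) q" using tot[of q "Suc q mod ?N"] q by auto
      then have "(R (Suc q mod ?N), R q) \<in> Ori" using OriI[of "Suc q mod ?N" q] q by simp
      then show False using so q unfolding is_source_def by blast
    qed
  qed
  define p0 where "p0 = (LEAST k. k < ?N \<and> \<not> ob k)"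
  have "?N - 1 < ?N \<and> \<not> ob (?N - 1)" using obN N0 by simp
  then have p0c: "p0 < ?N \<and> \<not> ob p0" unfolding p0_def by (rule LeastI)
  have p0: "p0 < ?N" "\<not> ob p0" using p0c by auto
  have p0min: "ob j" if j: "j < p0" for j
  proof -
    have "\<not> (j < ?N \<and> \<not> ob j)" using not_less_Least[of j "\<lambda>k. k < ?N \<and> \<not> ob k"] j unfolding p0_def by blast
    then show ?thesis using j p0 by simp
  qed
  have p01: "1 \<le> p0" using p0 ob0 by (cases p0) auto
  have snk: "\<exists>!s. is_sink (Alc e c) Ori s"
  proof
    show "is_sink (Alc e c) Ori (R p0)"
      unfolding is_sink_def
    proof (intro conjI allI)
      show "R p0 \<in> facet_refls (Alc e c)" using fr p0 by auto
      fix t show "(R p0, t) \<notin> Ori"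
      proof
        assume "(R p0, t) \<in> Ori"
        then obtain p q where pq: "p < ?N" "q < ?N" "R p0 = R p" "t = R q" "adj ?N p q" "before L p q" using OriE by blast
        have "p = p0" using Rinj[OF p0(1) pq(1) pq(3)] by simp
        then consider "q = Suc p0 mod ?N" | "p0 = Suc q mod ?N" using pq by blast
        then show False
        proof cases
          case 1
          have "before L p0 q" using pq(6) \<open>p = p0\<close> by simp
          then show False using 1 p0(2) unfolding ob_def by simp
        next
          case 2
          have pm: "p0 - 1 < ?N" using p0(1) by simp
          have "Suc q mod ?N = Suc (p0 - 1) mod ?N" using 2 sm[OF p01 p0(1)] by simp
          then have qp: "q = p0 - 1" using sucmod_inj[OF pq(2) pm] by blast
          have "ob (p0 - 1)" using p0min p01 by simp
          then have "before L (p0 - 1) p0" using sm[OF p01 p0(1)] unfolding ob_def by simp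
          then have "before L q p0" using qp by simp
          then show False using pq \<open>p = p0\<close> before_asym by blast
        qed
      qed
    qed
  next
    fix s assume si: "is_sink (Alc e c) Ori s"
    then obtain q where q: "q < ?N" "s = R q" unfolding is_sink_def fr by blast
    have nobq: "\<not> ob q"
    proof
      assume "ob q"
      then have "(R q, R (Suc q mod ?N)) \<in> Ori" using OriI[of q "Suc q mod ?N"] q unfolding ob_def by simp
      then show False using si q unfolding is_sink_def by blast
    qed
    have q1: "1 \<le> q" using nobq ob0 by (cases q) auto
    have "\<not> before L q (q - 1)"
    proof
      assume "before L q (q - 1)"
      then have "(R q, R (q - 1)) \<in> Ori" using OriI[of q "q - 1"] q q1 sm[OF q1 q(1)] by auto
      then show False using si q unfolding is_sink_def by blast
    qed
    then have obq1: "ob (q - 1)" using tot[of q "q - 1"] q q1 sm[OF q1 q(1)] unfolding ob_def by auto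
    have "p0 \<le> q" unfolding p0_def using q nobq by (intro Least_le) simp
    moreover have "\<not> p0 < q"
    proof
      assume "p0 < q"
      then have "ob p0" using propg[of p0 "q - 1"] obq1 q by simp
      then show False using p0 by simp
    qed
    ultimately show "s = R p0" using q by simp
  qed
  have prod: "produced_by_orientation (Alc e c) Ori (cprod (map (Rf e c) L))"
    unfolding produced_by_orientation_def
  proof (intro exI conjI allI impI)
    have injR: "inj_on R (set L)" using Rinj sL by (auto intro: inj_onI)
    show "distinct (map (Rf e c) L)" using d injR unfolding R_def by (simp add: distinct_map)
    show "set (map (Rf e c) L) = facet_refls (Alc e c)" using fr sL unfolding R_def by simp
    fix a b assume ab: "a < length (map (Rf e c) L)" "b < length (map (Rf e c) L)"
      "(map (Rf e c) L ! a, map (Rf e c) L ! b) \<in> Ori"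
    have la: "a < length L" "b < length L" using ab by auto
    have aN: "L ! a < ?N" "L ! b < ?N" using nth_mem[OF la(1)] nth_mem[OF la(2)] sL by auto
    have "(R (L ! a), R (L ! b)) \<in> Ori" using ab unfolding R_def by simp
    then have "before L (L ! a) (L ! b)" using OriI aN by blast
    then show "a < b" using ipos_of_nth[OF d] ab unfolding before_def by simp
  qed (rule refl)
  show ?thesis unfolding bigon_coxeter_element_def using N acyc src snk prod by auto
qed

theorem corollary7p8:
  fixes w :: "real^'n::finite \<Rightarrow> real^'n"
  assumes "CARD('n) \<ge> 2"
    and "coxeter_element w"
  shows "\<exists>C. chamber C \<and> bigon_coxeter_element C w"
proof -
  obtain C ss where C: "chamber C" "distinct ss" "set ss = facet_refls C" "w = cprod ss"
    using assms(2) unfolding coxeter_element_def by blast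
  show ?thesis
  proof (cases "CARD('n) = 2")
    case True
    then show ?thesis using C unfolding bigon_coxeter_element_def by auto
  next
    case False
    then have N: "3 \<le> CARD('n)" using assms(1) by simp
    obtain e :: "nat \<Rightarrow> 'n" and c where v: "valid e" and Ce: "C = Alc e c" using chamber_Alc[OF assms(1) C(1)] by blast
    let ?R = "Rf e c" and ?A = "{..<CARD('n)}"
    have fr: "set ss = ?R ` ?A" using C(3) facet_refls_Alc[OF v N] Ce by simp
    have injR: "inj_on ?R ?A" using Rf_inj[OF v N] by (auto intro: inj_onI)
    define L0 where "L0 = map (inv_into ?A ?R) ss"
    have m: "map ?R L0 = ss" unfolding L0_def map_map
    proof (rule map_idI)
      fix x assume "x \<in> set ss"
      then have "x \<in> ?R ` ?A" using fr by simp
      then show "(?R \<circ> inv_into ?A ?R) x = x" by (simp add: f_inv_into_f)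
    qed
    have d0: "distinct L0" unfolding L0_def using C(2) fr
      by (simp add: distinct_map inj_on_inv_into)
    have s0: "set L0 = ?A" unfolding L0_def using fr injR by (simp add: inv_into_image_cancel)
    obtain L e' c' where r: "valid e'" "distinct L" "set L = ?A"
      "cprod (map ?R L0) = cprod (map (Rf e' c') L)"
      "\<forall>k. 1 \<le> k \<longrightarrow> k < CARD('n) \<longrightarrow> before L (k - 1) k \<or> \<not> before L k (Suc k mod CARD('n))"
      using reach[OF N v d0 s0] by blast
    have "w = cprod (map (Rf e' c') L)" using C(4) m r(4) by simp
    then have "bigon_coxeter_element (Alc e' c') w" using final_bigon[OF N r(1) r(2) r(3) r(5)] by simp
    moreover have "chamber (Alc e' c')" using Alc_chamber[OF r(1) assms(1)] .
    ultimately show ?thesis by blast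
  qed
qed

end
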